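(* Let $\Xi$ be an orthogonal constructor rewrite system (with call-by-value rewriting) over a finite signature with constructors $\mathbf{c}_1,\dots,\mathbf{c}_g$ and function symbols $\mathbf{f}_1,\dots,\mathbf{f}_h$. Then there are $\lambda$-terms $F_{\mathbf{f}}$, one for each function symbol $\mathbf{f}$, and a natural number $k$ such that for every function symbol $\mathbf{f}$ of arity $a$ and all constructor terms $t_1,\dots,t_a$, writing $u=\mathbf{f}(t_1,\dots,t_a)$ and $M=F_{\mathbf{f}}\lceil t_1\rceil\cdots\lceil t_a\rceil$: (i) if $u$ rewrites to a constructor term $v$ in $n$ steps, then $M\rightarrow_v^{j}\lceil v\rceil$ for some $j\le kn$; (ii) if $u$ rewrites to a normal form $v$ that is not a constructor term, then $M\rightarrow_v^*\bot$; (iii) if $u$ diverges (admits an infinite rewrite sequence), then $M$ diverges (admits an infinite $\rightarrow_v$-sequence).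
   Context: A constructor rewrite system consists of a signature whose symbols are constructors or function symbols (each with an arity), and rules $\mathbf{f}(p_1,\dots,p_n)\rightarrow t$ where $\mathbf{f}$ is a function symbol, the patterns $p_i$ are built from constructors and variables, and $t$ is a term built from constructors, function symbols and variables. Orthogonal means no two distinct rules overlap and every variable occurs at most once in each left-hand side. Constructor terms are closed terms built only from constructors. Rewriting is call-by-value: a step replaces, anywhere in a term, an instance $l\sigma$ of a left-hand side by $r\sigma$, where $\sigma$ maps variables to constructor terms. A normal form is a term to which no step applies. $\lambda$-terms are $M::=x\mid\lambda x.M\mid MN$; values are $V::=x\mid\lambda x.M$. Weak call-by-value reduction $\rightarrow_v$ is the smallest relation with $(\lambda x.M)V\rightarrow_v M\{V/x\}$ for values $V$ and closed under $M\rightarrow_v N\Rightarrow ML\rightarrow_v NL$ and $LM\rightarrow_v LN$ (no reduction under $\lambda$). Scott encoding of constructor terms: $\lceil \mathbf{c}_i(t_1,\dots,t_n)\rceil=\lambda x_1.\cdots\lambda x_g.\lambda y.\,x_i\lceil t_1\rceil\cdots\lceil t_n\rceil$. The error term is $\bot=\lambda x_1.\cdots\lambda x_g.\lambda y.\,y$. *)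

theory Defs
  imports Main
begin

text \<open>Terms over a signature whose constructors are numbered 0..g-1 (paper: c_1..c_g)
 and function symbols 0..h-1 (paper: f_1..f_h); arities given by carity / farity.\<close>

datatype 'v rterm = RVar 'v | Con nat "'v rterm list" | Fun nat "'v rterm list"

fun rvars :: "'v rterm \<Rightarrow> 'v list" where
  "rvars (RVar x) = [x]"
| "rvars (Con c ts) = concat (map rvars ts)"
| "rvars (Fun f ts) = concat (map rvars ts)"

fun rsubst :: "('v \<Rightarrow> 'v rterm) \<Rightarrow> 'v rterm \<Rightarrow> 'v rterm" where
  "rsubst \<sigma> (RVar x) = \<sigma> x"
| "rsubst \<sigma> (Con c ts) = Con c (map (rsubst \<sigma>) ts)"
| "rsubst \<sigma> (Fun f ts) = Fun f (map (rsubst \<sigma>) ts)"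

fun wf_term :: "nat \<Rightarrow> nat \<Rightarrow> (nat \<Rightarrow> nat) \<Rightarrow> (nat \<Rightarrow> nat) \<Rightarrow> 'v rterm \<Rightarrow> bool" where
  "wf_term g h ca fa (RVar x) = True"
| "wf_term g h ca fa (Con c ts) = (c < g \<and> length ts = ca c \<and> (\<forall>t\<in>set ts. wf_term g h ca fa t))"
| "wf_term g h ca fa (Fun f ts) = (f < h \<and> length ts = fa f \<and> (\<forall>t\<in>set ts. wf_term g h ca fa t))"

fun is_pattern :: "nat \<Rightarrow> (nat \<Rightarrow> nat) \<Rightarrow> 'v rterm \<Rightarrow> bool" where
  "is_pattern g ca (RVar x) = True"
| "is_pattern g ca (Con c ts) = (c < g \<and> length ts = ca c \<and> (\<forall>t\<in>set ts. is_pattern g ca t))"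
| "is_pattern g ca (Fun f ts) = False"

fun is_cterm :: "nat \<Rightarrow> (nat \<Rightarrow> nat) \<Rightarrow> 'v rterm \<Rightarrow> bool" where
  "is_cterm g ca (RVar x) = False"
| "is_cterm g ca (Con c ts) = (c < g \<and> length ts = ca c \<and> (\<forall>t\<in>set ts. is_cterm g ca t))"
| "is_cterm g ca (Fun f ts) = False"

text \<open>A rule  f(p_1,...,p_n) \<rightarrow> t  is represented as (f, [p_1,...,p_n], t).\<close>
type_synonym 'v rule = "nat \<times> 'v rterm list \<times> 'v rterm"

definition wf_rule :: "nat \<Rightarrow> nat \<Rightarrow> (nat \<Rightarrow> nat) \<Rightarrow> (nat \<Rightarrow> nat) \<Rightarrow> 'v rule \<Rightarrow> bool" where
  "wf_rule g h ca fa \<rho> = (case \<rho> of (f, ps, r) \<Rightarrow>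
     f < h \<and> length ps = fa f \<and> (\<forall>p\<in>set ps. is_pattern g ca p) \<and>
     wf_term g h ca fa r \<and> set (rvars r) \<subseteq> (\<Union>p\<in>set ps. set (rvars p)))"

definition constructor_trs :: "nat \<Rightarrow> nat \<Rightarrow> (nat \<Rightarrow> nat) \<Rightarrow> (nat \<Rightarrow> nat) \<Rightarrow> 'v rule list \<Rightarrow> bool" where
  "constructor_trs g h ca fa R = (\<forall>\<rho>\<in>set R. wf_rule g h ca fa \<rho>)"

text \<open>Orthogonality: left-linear and no two distinct rules overlap. In a constructor
 system overlaps can only occur at the root, i.e. two left-hand sides are unifiable
 (after renaming apart).\<close>
definition orthogonal :: "'v rule list \<Rightarrow> bool" where
  "orthogonal R =
    ((\<forall>(f, ps, r)\<in>set R. distinct (concat (map rvars ps))) \<and>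
     (\<forall>i j. i < length R \<and> j < length R \<and> i \<noteq> j \<longrightarrow>
        \<not> (\<exists>\<sigma>1 \<sigma>2. Fun (fst (R ! i)) (map (rsubst \<sigma>1) (fst (snd (R ! i)))) =
                   Fun (fst (R ! j)) (map (rsubst \<sigma>2) (fst (snd (R ! j)))))))"

text \<open>Call-by-value rewriting: substitutions map variables to constructor terms;
 steps may take place anywhere in the term.\<close>
inductive cbv_step :: "nat \<Rightarrow> (nat \<Rightarrow> nat) \<Rightarrow> 'v rule list \<Rightarrow> 'v rterm \<Rightarrow> 'v rterm \<Rightarrow> bool"
  for g ca R where
  root: "(f, ps, r) \<in> set R \<Longrightarrow> (\<forall>x. is_cterm g ca (\<sigma> x)) \<Longrightarrow>
         cbv_step g ca R (Fun f (map (rsubst \<sigma>) ps)) (rsubst \<sigma> r)"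
| ctxt_con: "i < length ts \<Longrightarrow> cbv_step g ca R (ts ! i) t' \<Longrightarrow>
         cbv_step g ca R (Con c ts) (Con c (ts[i := t']))"
| ctxt_fun: "i < length ts \<Longrightarrow> cbv_step g ca R (ts ! i) t' \<Longrightarrow>
         cbv_step g ca R (Fun f ts) (Fun f (ts[i := t']))"

definition rnormal :: "nat \<Rightarrow> (nat \<Rightarrow> nat) \<Rightarrow> 'v rule list \<Rightarrow> 'v rterm \<Rightarrow> bool" where
  "rnormal g ca R t = (\<nexists>t'. cbv_step g ca R t t')"

datatype lterm = LVar nat | Abs lterm | App lterm lterm

fun lift :: "nat \<Rightarrow> lterm \<Rightarrow> lterm" where
  "lift k (LVar i) = (if i < k then LVar i else LVar (Suc i))"
| "lift k (Abs M) = Abs (lift (Suc k) M)"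
| "lift k (App M N) = App (lift k M) (lift k N)"

fun subst :: "lterm \<Rightarrow> nat \<Rightarrow> lterm \<Rightarrow> lterm" where
  "subst (LVar i) k N = (if k < i then LVar (i - 1) else if i = k then N else LVar i)"
| "subst (Abs M) k N = Abs (subst M (Suc k) (lift 0 N))"
| "subst (App M1 M2) k N = App (subst M1 k N) (subst M2 k N)"

fun is_value :: "lterm \<Rightarrow> bool" where
  "is_value (LVar i) = True"
| "is_value (Abs M) = True"
| "is_value (App M N) = False"

inductive beta_v :: "lterm \<Rightarrow> lterm \<Rightarrow> bool" where
  beta: "is_value V \<Longrightarrow> beta_v (App (Abs M) V) (subst M 0 V)"
| appL: "beta_v M N \<Longrightarrow> beta_v (App M L) (App N L)"
| appR: "beta_v M N \<Longrightarrow> beta_v (App L M) (App L N)"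

definition abss :: "nat \<Rightarrow> lterm \<Rightarrow> lterm" where
  "abss n M = (Abs ^^ n) M"

definition apps :: "lterm \<Rightarrow> lterm list \<Rightarrow> lterm" where
  "apps M Ns = foldl App M Ns"

text \<open>Scott encoding: constructor c_i (0-based index i) becomes
 \<lambda>x_1...\<lambda>x_g.\<lambda>y. x_(i+1) \<lceil>t_1\<rceil> ... \<lceil>t_n\<rceil>; under g+1 binders x_(i+1) has index g - i.\<close>
fun scott :: "nat \<Rightarrow> 'v rterm \<Rightarrow> lterm" where
  "scott g (Con c ts) = abss (Suc g) (apps (LVar (g - c)) (map (scott g) ts))"
| "scott g (RVar x) = undefined"
| "scott g (Fun f ts) = undefined"

definition bot_term :: "nat \<Rightarrow> lterm" where
  "bot_term g = abss (Suc g) (LVar 0)"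

end

theory Submission
  imports Defs
begin


fun closedb :: "nat \<Rightarrow> lterm \<Rightarrow> bool" where
  "closedb k (LVar i) = (i < k)"
| "closedb k (Abs M) = closedb (Suc k) M"
| "closedb k (App M N) = (closedb k M \<and> closedb k N)"

lemma closedb_mono: "closedb k M \<Longrightarrow> k \<le> m \<Longrightarrow> closedb m M"
  by (induction M arbitrary: k m) auto

lemma lift_closed: "closedb k M \<Longrightarrow> k \<le> m \<Longrightarrow> lift m M = M"
  by (induction M arbitrary: k m) auto

lemma subst_closed: "closedb k M \<Longrightarrow> k \<le> m \<Longrightarrow> subst M m N = M"
  by (induction M arbitrary: k m N) auto

fun inst :: "(nat \<Rightarrow> lterm) \<Rightarrow> nat \<Rightarrow> lterm \<Rightarrow> lterm" where
  "inst \<rho> k (LVar i) = (if i < k then LVar i else \<rho> (i - k))"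
| "inst \<rho> k (Abs M) = Abs (inst \<rho> (Suc k) M)"
| "inst \<rho> k (App M N) = App (inst \<rho> k M) (inst \<rho> k N)"

lemma inst_closed: "closedb k M \<Longrightarrow> k \<le> m \<Longrightarrow> inst \<rho> m M = M"
  by (induction M arbitrary: k m) auto

definition cenv :: "(nat \<Rightarrow> lterm) \<Rightarrow> bool" where
  "cenv \<rho> = (\<forall>i. closedb 0 (\<rho> i) \<and> is_value (\<rho> i))"

lemma closedb_inst: "cenv \<rho> \<Longrightarrow> closedb k (inst \<rho> k M)"
  by (induction M arbitrary: k) (auto simp: cenv_def intro: closedb_mono)

lemma value_inst: "cenv \<rho> \<Longrightarrow> is_value M \<Longrightarrow> is_value (inst \<rho> k M)"
  by (cases M) (auto simp: cenv_def)

definition econs :: "lterm \<Rightarrow> (nat \<Rightarrow> lterm) \<Rightarrow> nat \<Rightarrow> lterm" where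
  "econs V \<rho> i = (case i of 0 \<Rightarrow> V | Suc j \<Rightarrow> \<rho> j)"

lemma cenv_econs: "cenv \<rho> \<Longrightarrow> closedb 0 V \<Longrightarrow> is_value V \<Longrightarrow> cenv (econs V \<rho>)"
  by (auto simp: cenv_def econs_def split: nat.split)

lemma subst_inst: "cenv \<rho> \<Longrightarrow> closedb 0 V \<Longrightarrow>
   subst (inst \<rho> (Suc k) B) k V = inst (econs V \<rho>) k B"
proof (induction B arbitrary: k)
  case (LVar i)
  show ?case
  proof (cases "i < k")
    case True then show ?thesis by simp
  next
    case False
    show ?thesis
    proof (cases "i = k")
      case True then show ?thesis by (simp add: econs_def)
    next
      case False
      with \<open>\<not> i < k\<close> have "i > k" by simp
      then obtain m where m: "i - k = Suc m" "i - Suc k = m" by (metis Suc_diff_Suc)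
      have "closedb 0 (\<rho> m)" using LVar(1) by (simp add: cenv_def)
      then show ?thesis using \<open>i > k\<close> m by (simp add: econs_def subst_closed)
    qed
  qed
next
  case (Abs B)
  then show ?case using lift_closed[OF Abs(3)] by simp
next
  case (App B1 B2)
  then show ?case by simp
qed

lemma beta_inst: "cenv \<rho> \<Longrightarrow> closedb 0 V \<Longrightarrow> is_value V \<Longrightarrow>
   beta_v (App (inst \<rho> 0 (Abs B)) V) (inst (econs V \<rho>) 0 B)"
  using beta_v.beta[of V "inst \<rho> 1 B"] subst_inst[of \<rho> V 0 B] by simp

abbreviation red :: "nat \<Rightarrow> lterm \<Rightarrow> lterm \<Rightarrow> bool" where
  "red j \<equiv> beta_v ^^ j"

definition redle :: "nat \<Rightarrow> lterm \<Rightarrow> lterm \<Rightarrow> bool" where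
  "redle b M N = (\<exists>j\<le>b. red j M N)"

lemma red_add: "red a M N \<Longrightarrow> red b N P \<Longrightarrow> red (a + b) M P"
  by (metis relpowp_add relcompp.relcompI)

lemma red1: "beta_v M N \<Longrightarrow> red 1 M N" by (simp add: relcompp_apply)

lemma red0: "red 0 M M" by simp

lemma redle_trans: "redle a M N \<Longrightarrow> redle b N P \<Longrightarrow> redle (a + b) M P"
  unfolding redle_def by (meson add_le_mono red_add)

lemma redle_mono: "redle a M N \<Longrightarrow> a \<le> b \<Longrightarrow> redle b M N"
  unfolding redle_def by (meson order_trans)

lemma redle_red: "red j M N \<Longrightarrow> j \<le> b \<Longrightarrow> redle b M N"
  unfolding redle_def by blast

lemma redle_refl: "redle b M M"
  unfolding redle_def by (rule exI[of _ 0]) simp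

lemma red_appL: "red j M N \<Longrightarrow> red j (App M L) (App N L)"
proof (induction j arbitrary: N)
  case 0 then show ?case by simp
next
  case (Suc j)
  from Suc.prems obtain N' where "red j M N'" "beta_v N' N" by auto
  then show ?case using Suc.IH beta_v.appL by (meson relpowp_Suc_I)
qed

lemma red_appR: "red j M N \<Longrightarrow> red j (App L M) (App L N)"
proof (induction j arbitrary: N)
  case 0 then show ?case by simp
next
  case (Suc j)
  from Suc.prems obtain N' where "red j M N'" "beta_v N' N" by auto
  then show ?case using Suc.IH beta_v.appR by (meson relpowp_Suc_I)
qed

lemma redle_appL: "redle j M N \<Longrightarrow> redle j (App M L) (App N L)"
  unfolding redle_def using red_appL by blast
lemma redle_appR: "redle j M N \<Longrightarrow> redle j (App L M) (App L N)"
  unfolding redle_def using red_appR by blast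

lemma apps_Nil[simp]: "apps M [] = M" by (simp add: apps_def)
lemma apps_Cons[simp]: "apps M (N # Ns) = apps (App M N) Ns" by (simp add: apps_def)
lemma apps_snoc[simp]: "apps M (Ns @ [N]) = App (apps M Ns) N" by (simp add: apps_def)

lemma abss_0[simp]: "abss 0 M = M" by (simp add: abss_def)
lemma abss_Suc[simp]: "abss (Suc n) M = Abs (abss n M)" by (simp add: abss_def)

lemma inst_apps[simp]: "inst \<rho> k (apps M Ns) = apps (inst \<rho> k M) (map (inst \<rho> k) Ns)"
  by (induction Ns arbitrary: M) auto
lemma inst_abss[simp]: "inst \<rho> k (abss n M) = abss n (inst \<rho> (n + k) M)"
  by (induction n arbitrary: k) auto
lemma closedb_apps[simp]: "closedb k (apps M Ns) = (closedb k M \<and> (\<forall>N\<in>set Ns. closedb k N))"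
  by (induction Ns arbitrary: M) auto
lemma closedb_abss[simp]: "closedb k (abss n M) = closedb (n + k) M"
  by (induction n arbitrary: k) auto
lemma value_abss: "is_value M \<Longrightarrow> is_value (abss n M)"
  by (cases n) auto

lemma red_apps_head: "red j M M' \<Longrightarrow> red j (apps M Ns) (apps M' Ns)"
  by (induction Ns arbitrary: M M') (auto intro: red_appL)
lemma redle_apps_head: "redle j M M' \<Longrightarrow> redle j (apps M Ns) (apps M' Ns)"
  unfolding redle_def using red_apps_head by blast

lemma redle_apps_args:
  "length Ns = length Ms \<Longrightarrow> length bs = length Ms \<Longrightarrow>
   (\<forall>i<length Ms. redle (bs ! i) (Ms ! i) (Ns ! i)) \<Longrightarrow>
   redle (sum_list bs) (apps H Ms) (apps H Ns)"
proof (induction Ms arbitrary: H Ns bs)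
  case Nil then show ?case by (simp add: redle_refl)
next
  case (Cons M Ms)
  obtain N Ns' where N: "Ns = N # Ns'" using Cons.prems(1) by (cases Ns) auto
  obtain b bs' where b: "bs = b # bs'" using Cons.prems(2) by (cases bs) auto
  have 1: "redle (sum_list bs') (apps (App H M) Ms) (apps (App H M) Ns')"
    using Cons.IH[of Ns' bs' "App H M"] Cons.prems N b by fastforce
  have "redle b M N" using Cons.prems(3) N b by fastforce
  then have 2: "redle b (apps (App H M) Ns') (apps (App H N) Ns')"
    by (intro redle_apps_head redle_appR)
  from redle_trans[OF 1 2] show ?case using N b by (simp add: add.commute)
qed

fun pushl :: "lterm list \<Rightarrow> (nat \<Rightarrow> lterm) \<Rightarrow> nat \<Rightarrow> lterm" where
  "pushl [] \<rho> = \<rho>"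
| "pushl (V # Vs) \<rho> = pushl Vs (econs V \<rho>)"

lemma pushl_nth: "pushl Vs \<rho> i = (if i < length Vs then rev Vs ! i else \<rho> (i - length Vs))"
proof (induction Vs arbitrary: \<rho> i)
  case Nil then show ?case by simp
next
  case (Cons V Vs)
  show ?case
  proof (cases "i < length Vs")
    case True then show ?thesis by (simp add: Cons nth_append)
  next
    case False
    then show ?thesis
      by (cases "i = length Vs") (auto simp: Cons nth_append econs_def split: nat.split intro!: arg_cong[where f=\<rho>])
  qed
qed

lemma cenv_pushl: "cenv \<rho> \<Longrightarrow> \<forall>V\<in>set Vs. closedb 0 V \<and> is_value V \<Longrightarrow> cenv (pushl Vs \<rho>)"
  by (induction Vs arbitrary: \<rho>) (auto intro: cenv_econs)

lemma apps_abss: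
  "cenv \<rho> \<Longrightarrow> \<forall>V\<in>set Vs. closedb 0 V \<and> is_value V \<Longrightarrow>
   red (length Vs) (apps (inst \<rho> 0 (abss (length Vs) B)) Vs) (inst (pushl Vs \<rho>) 0 B)"
proof (induction Vs arbitrary: \<rho>)
  case Nil then show ?case by simp
next
  case (Cons V Vs)
  have c: "cenv (econs V \<rho>)" using Cons.prems by (auto intro: cenv_econs)
  have "beta_v (App (inst \<rho> 0 (Abs (abss (length Vs) B))) V) (inst (econs V \<rho>) 0 (abss (length Vs) B))"
    using Cons.prems by (intro beta_inst) auto
  then have 1: "red 1 (apps (App (inst \<rho> 0 (Abs (abss (length Vs) B))) V) Vs)
                  (apps (inst (econs V \<rho>) 0 (abss (length Vs) B)) Vs)"
    by (intro red_apps_head red1)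
  have 2: "red (length Vs) (apps (inst (econs V \<rho>) 0 (abss (length Vs) B)) Vs) (inst (pushl Vs (econs V \<rho>)) 0 B)"
    using Cons.IH[OF c] Cons.prems by auto
  from red_add[OF 1 2] show ?case by (simp del: inst.simps add: inst.simps(2)[symmetric])
qed

definition rhoI :: "nat \<Rightarrow> lterm" where "rhoI = (\<lambda>_. Abs (LVar 0))"
lemma cenv_rhoI: "cenv rhoI" by (simp add: cenv_def rhoI_def)

lemma funpow_econs: "((econs V ^^ d) \<rho>) (d + k) = \<rho> k"
  by (induction d arbitrary: k) (auto simp: econs_def)
lemma funpow_econs_lt: "i < d \<Longrightarrow> ((econs V ^^ d) \<rho>) i = V"
  by (induction d arbitrary: i) (auto simp: econs_def split: nat.split)
lemma cenv_funpow: "cenv \<rho> \<Longrightarrow> closedb 0 V \<Longrightarrow> is_value V \<Longrightarrow> cenv ((econs V ^^ d) \<rho>)"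
  by (induction d) (auto intro: cenv_econs)




declare relpowp.simps(2)[simp del]

definition I0 :: lterm where "I0 = Abs (LVar 0)"
definition TT :: lterm where "TT = Abs (Abs (LVar 1))"
definition FF :: lterm where "FF = Abs (Abs (LVar 0))"

lemma I0_props[simp]: "closedb k I0" "is_value I0" "inst \<rho> k I0 = I0"
  by (auto simp: I0_def)
lemma TT_props[simp]: "closedb k TT" "is_value TT" "inst \<rho> k TT = TT"
  by (auto simp: TT_def)
lemma FF_props[simp]: "closedb k FF" "is_value FF" "inst \<rho> k FF = FF"
  by (auto simp: FF_def)

definition dep :: "(nat \<Rightarrow> lterm) \<Rightarrow> nat \<Rightarrow> nat \<Rightarrow> lterm" where
  "dep \<rho> d = (econs I0 ^^ d) \<rho>"

lemma dep_0[simp]: "dep \<rho> 0 = \<rho>" by (simp add: dep_def)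
lemma dep_Suc: "econs I0 (dep \<rho> d) = dep \<rho> (Suc d)" by (simp add: dep_def)
lemma dep_add[simp]: "dep \<rho> d (d + k) = \<rho> k" by (simp add: dep_def funpow_econs)
lemma cenv_dep: "cenv \<rho> \<Longrightarrow> cenv (dep \<rho> d)" by (simp add: dep_def cenv_funpow)

definition ift :: "lterm \<Rightarrow> lterm \<Rightarrow> lterm \<Rightarrow> lterm" where
  "ift Bx K1 K2 = App (apps Bx [Abs K1, Abs K2]) I0"

lemma ift_T: assumes "cenv \<rho>" "redle b (inst \<rho> 0 Bx) TT"
  shows "redle (b + 3) (inst \<rho> 0 (ift Bx K1 K2)) (inst (dep \<rho> 1) 0 K1)"
proof -
  let ?A1 = "inst \<rho> 0 (Abs K1)" and ?A2 = "inst \<rho> 0 (Abs K2)"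
  have cl: "\<forall>V\<in>set [?A1, ?A2]. closedb 0 V \<and> is_value V"
    using closedb_inst[OF assms(1)] by auto
  have 1: "redle b (inst \<rho> 0 (ift Bx K1 K2)) (App (apps TT [?A1, ?A2]) I0)"
    unfolding ift_def using assms(2) by (simp del: apps_Cons add: redle_appL redle_apps_head)
  have "red (length [?A1, ?A2]) (apps (inst \<rho> 0 (abss (length [?A1, ?A2]) (LVar 1))) [?A1, ?A2])
         (inst (pushl [?A1, ?A2] \<rho>) 0 (LVar 1))"
    by (rule apps_abss[OF assms(1) cl])
  then have "red 2 (apps TT [?A1, ?A2]) ?A1"
    by (simp add: TT_def econs_def numeral_2_eq_2 del: apps_Cons)
  then have 2: "redle 2 (App (apps TT [?A1, ?A2]) I0) (App ?A1 I0)"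
    by (intro redle_appL redle_red) auto
  have "beta_v (App ?A1 I0) (inst (econs I0 \<rho>) 0 K1)"
    by (rule beta_inst[OF assms(1)]) auto
  then have 3: "redle 1 (App ?A1 I0) (inst (dep \<rho> 1) 0 K1)"
    by (intro redle_red[OF red1]) (auto simp: dep_def)
  from redle_trans[OF redle_trans[OF 1 2] 3] show ?thesis by (simp add: numeral_3_eq_3)
qed

lemma ift_F: assumes "cenv \<rho>" "redle b (inst \<rho> 0 Bx) FF"
  shows "redle (b + 3) (inst \<rho> 0 (ift Bx K1 K2)) (inst (dep \<rho> 1) 0 K2)"
proof -
  let ?A1 = "inst \<rho> 0 (Abs K1)" and ?A2 = "inst \<rho> 0 (Abs K2)"
  have cl: "\<forall>V\<in>set [?A1, ?A2]. closedb 0 V \<and> is_value V"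
    using closedb_inst[OF assms(1)] by auto
  have 1: "redle b (inst \<rho> 0 (ift Bx K1 K2)) (App (apps FF [?A1, ?A2]) I0)"
    unfolding ift_def using assms(2) by (simp del: apps_Cons add: redle_appL redle_apps_head)
  have "red (length [?A1, ?A2]) (apps (inst \<rho> 0 (abss (length [?A1, ?A2]) (LVar 0))) [?A1, ?A2])
         (inst (pushl [?A1, ?A2] \<rho>) 0 (LVar 0))"
    by (rule apps_abss[OF assms(1) cl])
  then have "red 2 (apps FF [?A1, ?A2]) ?A2"
    by (simp add: FF_def econs_def numeral_2_eq_2 del: apps_Cons)
  then have 2: "redle 2 (App (apps FF [?A1, ?A2]) I0) (App ?A2 I0)"
    by (intro redle_appL redle_red) auto
  have "beta_v (App ?A2 I0) (inst (econs I0 \<rho>) 0 K2)"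
    by (rule beta_inst[OF assms(1)]) auto
  then have 3: "redle 1 (App ?A2 I0) (inst (dep \<rho> 1) 0 K2)"
    by (intro redle_red[OF red1]) (auto simp: dep_def)
  from redle_trans[OF redle_trans[OF 1 2] 3] show ?thesis by (simp add: numeral_3_eq_3)
qed

locale sys =
  fixes g h :: nat and ca fa :: "nat \<Rightarrow> nat" and R :: "'v rule list"
  assumes trs: "constructor_trs g h ca fa R" and orth: "orthogonal R"
    and exct: "\<exists>w::'v rterm. is_cterm g ca w"
begin

lemma closed_scott: "is_cterm g ca (t::'v rterm) \<Longrightarrow> closedb 0 (scott g t)"
proof (induction t)
  case (Con c ts)
  then show ?case by (auto intro: closedb_mono)
qed auto

lemma value_scott: "is_cterm g ca (t::'v rterm) \<Longrightarrow> is_value (scott g t)"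
  by (cases t) auto

lemma inst_scott[simp]: "is_cterm g ca (t::'v rterm) \<Longrightarrow> inst \<rho> k (scott g t) = scott g t"
  using closed_scott inst_closed by blast

lemma closed_bot[simp]: "closedb k (bot_term g)" "is_value (bot_term g)" "inst \<rho> k (bot_term g) = bot_term g"
  by (auto simp: bot_term_def intro: inst_closed)

lemma scott_app:
  assumes "c < g" "\<forall>u\<in>set us. is_cterm g ca (u::'v rterm)" "length Bs = Suc g"
    "\<forall>B\<in>set Bs. closedb 0 B \<and> is_value B"
  shows "red (Suc g) (apps (scott g (Con c us)) Bs) (apps (Bs ! c) (map (scott g) us))"
proof -
  let ?X = "apps (LVar (g - c)) (map (scott g) us)"
  have cX: "closedb (Suc g) ?X" using assms(1,2) closed_scott by (auto intro: closedb_mono)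
  have e: "scott g (Con c us) = inst rhoI 0 (abss (length Bs) ?X)"
    using inst_closed[OF cX, of "Suc g" rhoI] assms(3) by simp
  have "red (length Bs) (apps (inst rhoI 0 (abss (length Bs) ?X)) Bs) (inst (pushl Bs rhoI) 0 ?X)"
    by (rule apps_abss[OF cenv_rhoI assms(4)])
  moreover have "inst (pushl Bs rhoI) 0 ?X = apps (Bs ! c) (map (scott g) us)"
  proof -
    have "g - c < length Bs" "length Bs - Suc (g - c) = c" using assms by auto
    then show ?thesis using assms by (simp add: pushl_nth rev_nth comp_def cong: map_cong)
  qed
  ultimately show ?thesis using e assms(3) by simp
qed

lemma bot_app:
  assumes "length As = g" "\<forall>B\<in>set (As @ [Y]). closedb 0 B \<and> is_value B"
  shows "red (Suc g) (apps (bot_term g) (As @ [Y])) Y"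
proof -
  have e: "bot_term g = inst rhoI 0 (abss (length (As @ [Y])) (LVar 0))"
    using assms(1) by (simp add: bot_term_def)
  have "red (length (As @ [Y])) (apps (inst rhoI 0 (abss (length (As @ [Y])) (LVar 0))) (As @ [Y]))
          (inst (pushl (As @ [Y]) rhoI) 0 (LVar 0))"
    by (rule apps_abss[OF cenv_rhoI assms(2)])
  then show ?thesis using e assms(1) by (simp add: pushl_nth del: apps_snoc)
qed

definition branches :: "(nat \<Rightarrow> lterm) \<Rightarrow> lterm \<Rightarrow> lterm list" where
  "branches B Y = map (\<lambda>c. abss (ca c) (B c)) [0..<g] @ [Y]"

definition caseC :: "(nat \<Rightarrow> lterm) \<Rightarrow> lterm \<Rightarrow> lterm" where
  "caseC B Y = Abs (apps (LVar 0) (branches B Y))"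

definition cbr :: "(nat \<Rightarrow> lterm) \<Rightarrow> lterm \<Rightarrow> bool" where
  "cbr B Y = ((\<forall>c<g. closedb (ca c) (B c) \<and> is_value (B c)) \<and> closedb 0 Y \<and> is_value Y)"

lemma branches_cl: "cbr B Y \<Longrightarrow> \<forall>V\<in>set (branches B Y). closedb 0 V \<and> is_value V"
  by (auto simp: cbr_def branches_def intro: value_abss)

lemma caseC_closed: "cbr B Y \<Longrightarrow> closedb k (caseC B Y)"
proof -
  assume a: "cbr B Y"
  have "closedb 1 (apps (LVar 0) (branches B Y))"
    using branches_cl[OF a] by (auto intro: closedb_mono)
  then show ?thesis unfolding caseC_def by (auto intro: closedb_mono)
qed

lemma caseC_scott:
  assumes "cbr B Y" "c < g" "\<forall>u\<in>set us. is_cterm g ca (u::'v rterm)" "length us = ca c"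
  shows "red (1 + Suc g + ca c) (App (caseC B Y) (scott g (Con c us)))
            (inst (pushl (map (scott g) us) rhoI) 0 (B c))"
proof -
  let ?V = "scott g (Con c us)"
  have ct: "is_cterm g ca (Con c us)" using assms(2,3,4) by simp
  have cV: "closedb 0 ?V" "is_value ?V"
    using closed_scott[OF ct] value_scott[OF ct] by auto
  have e1: "caseC B Y = inst rhoI 0 (caseC B Y)"
    using caseC_closed[OF assms(1)] inst_closed le0 by metis
  have b1: "beta_v (App (inst rhoI 0 (caseC B Y)) ?V)
          (inst (econs ?V rhoI) 0 (apps (LVar 0) (branches B Y)))"
    unfolding caseC_def by (rule beta_inst[OF cenv_rhoI cV])
  have b2: "inst (econs ?V rhoI) 0 (apps (LVar 0) (branches B Y)) = apps ?V (branches B Y)"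
  proof -
    have "map (inst (econs ?V rhoI) 0) (branches B Y) = branches B Y"
      using branches_cl[OF assms(1)] by (intro map_idI) (metis inst_closed le0)
    then show ?thesis by (simp add: econs_def)
  qed
  have s1: "red 1 (App (caseC B Y) ?V) (apps ?V (branches B Y))"
    using b1 b2 e1 red1 by metis
  have lb: "length (branches B Y) = Suc g" by (simp add: branches_def)
  have s2: "red (Suc g) (apps ?V (branches B Y)) (apps (branches B Y ! c) (map (scott g) us))"
    by (rule scott_app[OF assms(2,3) lb branches_cl[OF assms(1)]])
  have bc0: "branches B Y ! c = abss (ca c) (B c)"
    using assms(2) by (simp add: branches_def nth_append)
  have "closedb 0 (abss (ca c) (B c))" using assms(1,2) by (simp add: cbr_def)
  then have bc: "branches B Y ! c = inst rhoI 0 (abss (length (map (scott g) us)) (B c))"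
    using bc0 assms(4) inst_closed[of 0 "abss (ca c) (B c)" 0 rhoI] by simp
  have cl: "\<forall>V\<in>set (map (scott g) us). closedb 0 V \<and> is_value V"
    using assms(3) closed_scott value_scott by auto
  have s3: "red (ca c) (apps (branches B Y ! c) (map (scott g) us)) (inst (pushl (map (scott g) us) rhoI) 0 (B c))"
    using apps_abss[OF cenv_rhoI cl, of "B c"] assms(4) bc by simp
  from red_add[OF red_add[OF s1 s2] s3] show ?thesis by simp
qed

lemma caseC_bot:
  assumes "cbr B Y"
  shows "red (Suc (Suc g)) (App (caseC B Y) (bot_term g)) Y"
proof -
  let ?V = "bot_term g"
  have e1: "caseC B Y = inst rhoI 0 (caseC B Y)"
    using caseC_closed[OF assms(1)] inst_closed le0 by metis
  have b1: "beta_v (App (inst rhoI 0 (caseC B Y)) ?V)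
          (inst (econs ?V rhoI) 0 (apps (LVar 0) (branches B Y)))"
    unfolding caseC_def by (rule beta_inst[OF cenv_rhoI]) auto
  have b2: "inst (econs ?V rhoI) 0 (apps (LVar 0) (branches B Y)) = apps ?V (branches B Y)"
  proof -
    have "map (inst (econs ?V rhoI) 0) (branches B Y) = branches B Y"
      using branches_cl[OF assms(1)] by (intro map_idI) (metis inst_closed le0)
    then show ?thesis by (simp add: econs_def)
  qed
  have s1: "red 1 (App (caseC B Y) ?V) (apps ?V (branches B Y))"
    using b1 b2 e1 red1 by metis
  have cl: "\<forall>B\<in>set (map (\<lambda>c. abss (ca c) (B c)) [0..<g] @ [Y]). closedb 0 B \<and> is_value B"
    using branches_cl[OF assms(1)] by (simp add: branches_def)
  have s2: "red (Suc g) (apps ?V (branches B Y)) Y"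
    unfolding branches_def by (rule bot_app[OF _ cl]) simp
  from red_add[OF s1 s2] show ?thesis by simp
qed

definition ISB :: lterm where "ISB = caseC (\<lambda>_. FF) TT"
definition ISC :: "nat \<Rightarrow> lterm" where "ISC c = caseC (\<lambda>c'. if c' = c then TT else FF) FF"
definition PROJ :: "nat \<Rightarrow> nat \<Rightarrow> lterm" where
  "PROJ c i = caseC (\<lambda>c'. if c' = c \<and> i < ca c then LVar (ca c - Suc i) else I0) I0"

lemma cbr_ISB: "cbr (\<lambda>_. FF) TT" by (simp add: cbr_def)
lemma cbr_ISC: "cbr (\<lambda>c'. if c' = c then TT else FF) FF" by (simp add: cbr_def)
lemma cbr_PROJ: "cbr (\<lambda>c'. if c' = c \<and> i < ca c then LVar (ca c - Suc i) else I0) I0"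
  by (auto simp: cbr_def)

lemma ISB_inst[simp]: "inst \<rho> k ISB = ISB"
  unfolding ISB_def by (rule inst_closed[OF caseC_closed[OF cbr_ISB, of 0]]) simp
lemma ISC_inst[simp]: "inst \<rho> k (ISC c) = ISC c"
  unfolding ISC_def by (rule inst_closed[OF caseC_closed[OF cbr_ISC, of 0]]) simp
lemma PROJ_inst[simp]: "inst \<rho> k (PROJ c i) = PROJ c i"
  unfolding PROJ_def by (rule inst_closed[OF caseC_closed[OF cbr_PROJ, of 0]]) simp

definition sca :: nat where "sca = (\<Sum>c<g. ca c)"
definition U :: nat where "U = g + 5 + sca"

lemma ca_le: "c < g \<Longrightarrow> ca c \<le> sca"
  unfolding sca_def by (rule member_le_sum) auto

lemma cterm_Con: "is_cterm g ca (w::'v rterm) \<Longrightarrow> \<exists>c us. w = Con c us \<and> c < g \<and> length us = ca c \<and> (\<forall>u\<in>set us. is_cterm g ca u)"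
  by (cases w) auto

lemma ISB_scott: "is_cterm g ca (w::'v rterm) \<Longrightarrow> \<exists>j. j + 3 \<le> U \<and> red j (App ISB (scott g w)) FF"
proof -
  assume "is_cterm g ca w"
  then obtain c us where w: "w = Con c us" "c < g" "length us = ca c" "\<forall>u\<in>set us. is_cterm g ca u"
    using cterm_Con by blast
  have "red (1 + Suc g + ca c) (App (caseC (\<lambda>_. FF) TT) (scott g (Con c us)))
     (inst (pushl (map (scott g) us) rhoI) 0 FF)"
    by (rule caseC_scott[OF cbr_ISB w(2,4,3)])
  then have "red (1 + Suc g + ca c) (App ISB (scott g w)) FF"
    using w(1) unfolding ISB_def by (simp del: scott.simps)
  moreover have "1 + Suc g + ca c + 3 \<le> U" using ca_le[OF w(2)] by (simp add: U_def)
  ultimately show ?thesis by blast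
qed

lemma ISB_bot: "red (Suc (Suc g)) (App ISB (bot_term g)) TT"
  unfolding ISB_def by (rule caseC_bot[OF cbr_ISB])

lemma ISC_scott: "c' < g \<Longrightarrow> \<forall>u\<in>set us. is_cterm g ca (u::'v rterm) \<Longrightarrow> length us = ca c' \<Longrightarrow>
   \<exists>j. j + 3 \<le> U \<and> red j (App (ISC c) (scott g (Con c' us))) (if c' = c then TT else FF)"
proof -
  assume w: "c' < g" "\<forall>u\<in>set us. is_cterm g ca (u::'v rterm)" "length us = ca c'"
  have "red (1 + Suc g + ca c') (App (caseC (\<lambda>c'. if c' = c then TT else FF) FF) (scott g (Con c' us)))
     (inst (pushl (map (scott g) us) rhoI) 0 (if c' = c then TT else FF))"
    by (rule caseC_scott[OF cbr_ISC w])
  then have "red (1 + Suc g + ca c') (App (ISC c) (scott g (Con c' us))) (if c' = c then TT else FF)"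
    unfolding ISC_def by (cases "c' = c") (simp_all del: scott.simps)
  moreover have "1 + Suc g + ca c' + 3 \<le> U" using ca_le[OF w(1)] by (simp add: U_def)
  ultimately show ?thesis by blast
qed

lemma PROJ_scott: "c < g \<Longrightarrow> \<forall>u\<in>set us. is_cterm g ca (u::'v rterm) \<Longrightarrow> length us = ca c \<Longrightarrow> i < ca c \<Longrightarrow>
   redle U (App (PROJ c i) (scott g (Con c us))) (scott g (us ! i))"
proof -
  assume w: "c < g" "\<forall>u\<in>set us. is_cterm g ca (u::'v rterm)" "length us = ca c" "i < ca c"
  have "red (1 + Suc g + ca c) (App (caseC (\<lambda>c'. if c' = c \<and> i < ca c then LVar (ca c - Suc i) else I0) I0) (scott g (Con c us)))
         (inst (pushl (map (scott g) us) rhoI) 0 (if c = c \<and> i < ca c then LVar (ca c - Suc i) else I0))"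
    by (rule caseC_scott[OF cbr_PROJ w(1-3)])
  then have "red (1 + Suc g + ca c) (App (PROJ c i) (scott g (Con c us)))
         (inst (pushl (map (scott g) us) rhoI) 0 (LVar (ca c - Suc i)))"
    using w(4) unfolding PROJ_def by (simp del: scott.simps inst.simps)
  moreover have "inst (pushl (map (scott g) us) rhoI) 0 (LVar (ca c - Suc i)) = scott g (us ! i)"
    using w by (simp add: pushl_nth rev_nth)
  moreover have "1 + Suc g + ca c \<le> U" using ca_le[OF w(1)] by (simp add: U_def)
  ultimately show ?thesis by (auto intro: redle_red)
qed

end



context sys begin

definition argv :: "nat \<Rightarrow> nat \<Rightarrow> nat \<Rightarrow> lterm" where
  "argv a d i = LVar (d + (a - Suc i))"

lemma inst_dep_var: "inst (dep \<rho> d) 0 (LVar (d + k)) = \<rho> k"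
  by simp

lemma argv_val: "length vs = a \<Longrightarrow> i < a \<Longrightarrow> inst (dep (pushl vs \<rho>0) d) 0 (argv a d i) = vs ! i"
  unfolding argv_def inst_dep_var by (simp add: pushl_nth rev_nth)

lemma dep_dep1: "dep (dep \<rho> d) (Suc 0) = dep \<rho> (Suc d)"
  by (simp add: dep_def)

fun chk :: "nat \<Rightarrow> nat \<Rightarrow> nat list \<Rightarrow> (nat \<Rightarrow> lterm) \<Rightarrow> lterm" where
  "chk a d [] K = K d"
| "chk a d (i # is) K = ift (App ISB (argv a d i)) (bot_term g) (chk a (Suc d) is K)"

definition sval :: "lterm \<Rightarrow> bool" where
  "sval v = (\<exists>w::'v rterm. is_cterm g ca w \<and> v = scott g w)"
definition bval :: "lterm \<Rightarrow> bool" where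
  "bval v = (sval v \<or> v = bot_term g)"

lemma sval_cl: "sval v \<Longrightarrow> closedb 0 v \<and> is_value v"
  unfolding sval_def using closed_scott value_scott by blast
lemma bval_cl: "bval v \<Longrightarrow> closedb 0 v \<and> is_value v"
  unfolding bval_def using sval_cl by auto

lemma chk_ok:
  assumes "cenv \<rho>0" "length vs = a" "\<forall>v\<in>set vs. closedb 0 v \<and> is_value v"
  shows "\<forall>i\<in>set is. i < a \<and> sval (vs ! i) \<Longrightarrow>
   redle (length is * U) (inst (dep (pushl vs \<rho>0) d) 0 (chk a d is K))
      (inst (dep (pushl vs \<rho>0) (d + length is)) 0 (K (d + length is)))"
proof (induction "is" arbitrary: d)
  case Nil then show ?case by (simp add: redle_refl)
next
  case (Cons i "is")
  let ?\<rho> = "dep (pushl vs \<rho>0) d"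
  have c: "cenv ?\<rho>" using assms by (intro cenv_dep cenv_pushl) auto
  obtain w where w: "is_cterm g ca (w::'v rterm)" "vs ! i = scott g w"
    using Cons.prems by (auto simp: sval_def)
  obtain j where j: "j + 3 \<le> U" "red j (App ISB (scott g w)) FF" using ISB_scott[OF w(1)] by blast
  have "inst ?\<rho> 0 (App ISB (argv a d i)) = App ISB (scott g w)"
    using argv_val[OF assms(2)] Cons.prems w by simp
  then have "redle j (inst ?\<rho> 0 (App ISB (argv a d i))) FF" using j by (auto intro: redle_red)
  from ift_F[OF c this] have 1: "redle (j + 3) (inst ?\<rho> 0 (chk a d (i # is) K))
       (inst (dep (pushl vs \<rho>0) (Suc d)) 0 (chk a (Suc d) is K))"
    by (simp add: dep_dep1)
  have p: "\<forall>i\<in>set is. i < a \<and> sval (vs ! i)" using Cons.prems by simp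
  have 2: "redle (length is * U) (inst (dep (pushl vs \<rho>0) (Suc d)) 0 (chk a (Suc d) is K))
      (inst (dep (pushl vs \<rho>0) (Suc d + length is)) 0 (K (Suc d + length is)))"
    by (rule Cons.IH[OF p])
  from redle_trans[OF 1 2] have "redle (j + 3 + length is * U) (inst ?\<rho> 0 (chk a d (i # is) K))
      (inst (dep (pushl vs \<rho>0) (d + length (i # is))) 0 (K (d + length (i # is))))" by simp
  then show ?case by (rule redle_mono) (use j in simp)
qed

lemma chk_bot:
  assumes "cenv \<rho>0" "length vs = a" "\<forall>v\<in>set vs. closedb 0 v \<and> is_value v"
  shows "\<forall>i\<in>set is. i < a \<and> bval (vs ! i) \<Longrightarrow> \<exists>i\<in>set is. vs ! i = bot_term g \<Longrightarrow>
   \<exists>b. redle b (inst (dep (pushl vs \<rho>0) d) 0 (chk a d is K)) (bot_term g)"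
proof (induction "is" arbitrary: d)
  case Nil then show ?case by simp
next
  case (Cons i "is")
  let ?\<rho> = "dep (pushl vs \<rho>0) d"
  have c: "cenv ?\<rho>" using assms by (intro cenv_dep cenv_pushl) auto
  have e: "inst ?\<rho> 0 (App ISB (argv a d i)) = App ISB (vs ! i)"
    using argv_val[OF assms(2)] Cons.prems by simp
  show ?case
  proof (cases "vs ! i = bot_term g")
    case True
    then have "redle (Suc (Suc g)) (inst ?\<rho> 0 (App ISB (argv a d i))) TT"
      using e ISB_bot by (auto intro: redle_red)
    then have "redle (Suc (Suc g) + 3) (inst ?\<rho> 0 (ift (App ISB (argv a d i)) (bot_term g) (chk a (Suc d) is K)))
        (inst (dep ?\<rho> 1) 0 (bot_term g))" by (rule ift_T[OF c])
    then show ?thesis by (intro exI[of _ "Suc (Suc g) + 3"]) simp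
  next
    case False
    then obtain w where w: "is_cterm g ca (w::'v rterm)" "vs ! i = scott g w"
      using Cons.prems by (auto simp: bval_def sval_def)
    obtain j where j: "j + 3 \<le> U" "red j (App ISB (scott g w)) FF" using ISB_scott[OF w(1)] by blast
    then have "redle j (inst ?\<rho> 0 (App ISB (argv a d i))) FF" using e w by (auto intro: redle_red)
    from ift_F[OF c this] have 1: "redle (j + 3) (inst ?\<rho> 0 (chk a d (i # is) K))
       (inst (dep (pushl vs \<rho>0) (Suc d)) 0 (chk a (Suc d) is K))"
      by (simp add: dep_dep1)
    obtain b where "redle b (inst (dep (pushl vs \<rho>0) (Suc d)) 0 (chk a (Suc d) is K)) (bot_term g)"
      using Cons False by auto
    with redle_trans[OF 1 this] show ?thesis by blast
  qed
qed

definition build :: "nat \<Rightarrow> nat \<Rightarrow> lterm" where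
  "build c d = abss (Suc g) (apps (LVar (g - c)) (map (\<lambda>i. LVar (Suc g + d + (ca c - Suc i))) [0..<ca c]))"

definition CC :: "nat \<Rightarrow> lterm" where
  "CC c = inst rhoI 0 (abss (ca c) (chk (ca c) 0 [0..<ca c] (build c)))"

lemma build_val: "length vs = ca c \<Longrightarrow>
   inst (dep (pushl vs \<rho>0) d) 0 (build c d) = abss (Suc g) (apps (LVar (g - c)) vs)"
proof -
  assume l: "length vs = ca c"
  have "map (\<lambda>i. inst (dep (pushl vs \<rho>0) d) (Suc g) (LVar (Suc g + d + (ca c - Suc i)))) [0..<ca c]
        = map (\<lambda>i. vs ! i) [0..<length vs]"
    using l by (auto simp: pushl_nth rev_nth add.assoc[symmetric])
  also have "\<dots> = vs" by (rule map_nth)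
  finally have m: "map (\<lambda>i. inst (dep (pushl vs \<rho>0) d) (Suc g) (LVar (Suc g + d + (ca c - Suc i)))) [0..<ca c] = vs" .
  have "g - c < Suc g" by simp
  show ?thesis unfolding build_def inst_abss inst_apps map_map o_def add_0_right
    by (simp only: m) (simp add: \<open>g - c < Suc g\<close>)
qed

lemma CC_eval:
  assumes "c < g" "\<forall>u\<in>set us. is_cterm g ca (u::'v rterm)" "length us = ca c"
  shows "redle (Suc sca * U) (apps (CC c) (map (scott g) us)) (scott g (Con c us))"
proof -
  let ?vs = "map (scott g) us"
  have cl: "\<forall>V\<in>set ?vs. closedb 0 V \<and> is_value V" using assms(2) closed_scott value_scott by auto
  have 1: "red (ca c) (apps (CC c) ?vs) (inst (dep (pushl ?vs rhoI) 0) 0 (chk (ca c) 0 [0..<ca c] (build c)))"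
    using apps_abss[OF cenv_rhoI cl, of "chk (ca c) 0 [0..<ca c] (build c)"] assms(3)
    by (simp add: CC_def)
  have sv: "\<forall>i\<in>set [0..<ca c]. i < ca c \<and> sval (?vs ! i)"
    using assms(2,3) by (auto simp: sval_def)
  have 2: "redle (ca c * U) (inst (dep (pushl ?vs rhoI) 0) 0 (chk (ca c) 0 [0..<ca c] (build c)))
        (inst (dep (pushl ?vs rhoI) (ca c)) 0 (build c (ca c)))"
  proof -
    have lv: "length ?vs = ca c" using assms(3) by simp
    show ?thesis using chk_ok[OF cenv_rhoI lv cl sv, where d=0 and K="build c"] by simp
  qed
  have e: "inst (dep (pushl ?vs rhoI) (ca c)) 0 (build c (ca c)) = scott g (Con c us)"
    using build_val[of ?vs c rhoI "ca c"] assms(3) by simp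
  from redle_trans[OF redle_red[OF 1 order.refl] 2] e
  have "redle (ca c + ca c * U) (apps (CC c) ?vs) (scott g (Con c us))" by simp
  moreover have "ca c + ca c * U \<le> Suc sca * U"
  proof -
    have "ca c \<le> sca" using ca_le[OF assms(1)] .
    moreover have "sca \<le> U" by (simp add: U_def)
    ultimately show ?thesis by (simp add: add_mono mult_le_mono)
  qed
  ultimately show ?thesis by (rule redle_mono)
qed

lemma CC_bot:
  assumes "length vs = ca c" "\<forall>v\<in>set vs. bval v" "\<exists>v\<in>set vs. v = bot_term g"
  shows "\<exists>b. redle b (apps (CC c) vs) (bot_term g)"
proof -
  have cl: "\<forall>V\<in>set vs. closedb 0 V \<and> is_value V" using assms(2) bval_cl by auto
  have 1: "red (ca c) (apps (CC c) vs) (inst (dep (pushl vs rhoI) 0) 0 (chk (ca c) 0 [0..<ca c] (build c)))"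
    using apps_abss[OF cenv_rhoI cl, of "chk (ca c) 0 [0..<ca c] (build c)"] assms(1)
    by (simp add: CC_def)
  have bv: "\<forall>i\<in>set [0..<ca c]. i < ca c \<and> bval (vs ! i)" using assms(1,2) by auto
  have ex: "\<exists>i\<in>set [0..<ca c]. vs ! i = bot_term g" using assms(1,3) by (auto simp: in_set_conv_nth)
  obtain b where "redle b (inst (dep (pushl vs rhoI) 0) 0 (chk (ca c) 0 [0..<ca c] (build c))) (bot_term g)"
    using chk_bot[OF cenv_rhoI assms(1) cl bv ex] by blast
  from redle_trans[OF redle_red[OF 1 order.refl] this] show ?thesis by blast
qed

fun acc :: "nat \<Rightarrow> nat \<Rightarrow> (nat \<times> nat) list \<Rightarrow> nat \<Rightarrow> lterm" where
  "acc a i [] d = argv a d i"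
| "acc a i ((c, j) # \<pi>) d = App (PROJ c j) (acc a i \<pi> d)"

definition Acc :: "nat \<Rightarrow> (nat \<Rightarrow> lterm) \<Rightarrow> nat \<Rightarrow> (nat \<times> nat) list \<Rightarrow> 'v rterm \<Rightarrow> bool" where
  "Acc a \<rho>' i \<pi> w = (\<forall>d. redle (length \<pi> * U) (inst (dep \<rho>' d) 0 (acc a i \<pi> d)) (scott g w))"

lemma Acc_child:
  assumes "Acc a \<rho>' i \<pi> (Con c us)" "c < g" "\<forall>u\<in>set us. is_cterm g ca u" "length us = ca c" "j < ca c"
  shows "Acc a \<rho>' i ((c, j) # \<pi>) (us ! j)"
  unfolding Acc_def
proof
  fix d
  have 1: "redle (length \<pi> * U) (inst (dep \<rho>' d) 0 (acc a i ((c, j) # \<pi>) d))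
            (App (PROJ c j) (scott g (Con c us)))"
    using assms(1) unfolding Acc_def by (simp add: redle_appR del: scott.simps)
  from redle_trans[OF 1 PROJ_scott[OF assms(2-5)]]
  show "redle (length ((c, j) # \<pi>) * U) (inst (dep \<rho>' d) 0 (acc a i ((c, j) # \<pi>) d)) (scott g (us ! j))"
    by (simp add: add.commute)
qed

lemma Acc_arg: "length vs = a \<Longrightarrow> i < a \<Longrightarrow> vs ! i = scott g w \<Longrightarrow> Acc a (pushl vs \<rho>0) i [] w"
  unfolding Acc_def using argv_val by (simp add: redle_refl)

fun pmatch :: "'v rterm \<Rightarrow> 'v rterm \<Rightarrow> bool" and pmatchl :: "'v rterm list \<Rightarrow> 'v rterm list \<Rightarrow> bool" where
  "pmatch (RVar x) w = True"
| "pmatch (Con c qs) (Con c' us) = (c = c' \<and> pmatchl qs us)"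
| "pmatch (Con c qs) (RVar x) = False"
| "pmatch (Con c qs) (Fun f us) = False"
| "pmatch (Fun f qs) w = False"
| "pmatchl [] [] = True"
| "pmatchl (q # qs) (u # us) = (pmatch q u \<and> pmatchl qs us)"
| "pmatchl [] (u # us) = False"
| "pmatchl (q # qs) [] = False"

lemma pmatchl_eq: "pmatchl qs us = list_all2 pmatch qs us"
  by (induction qs arbitrary: us) (auto simp: list_all2_Cons1 elim: pmatchl.elims)

fun tsz :: "'v rterm \<Rightarrow> nat" where
  "tsz (RVar x) = 1"
| "tsz (Con c ts) = Suc (sum_list (map tsz ts))"
| "tsz (Fun f ts) = Suc (sum_list (map tsz ts))"

lemma tsz_pos: "tsz t \<ge> 1" by (cases t) auto

end



context sys begin

fun tp :: "nat \<Rightarrow> nat \<Rightarrow> (nat \<times> nat) list \<Rightarrow> 'v rterm \<Rightarrow> nat \<Rightarrow> (nat \<Rightarrow> lterm) \<Rightarrow> (nat \<Rightarrow> lterm) \<Rightarrow> lterm"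
and tpl :: "nat \<Rightarrow> nat \<Rightarrow> (nat \<times> nat) list \<Rightarrow> nat \<Rightarrow> nat \<Rightarrow> 'v rterm list \<Rightarrow> nat \<Rightarrow> (nat \<Rightarrow> lterm) \<Rightarrow> (nat \<Rightarrow> lterm) \<Rightarrow> lterm" where
  "tp a i \<pi> (RVar x) d K F = K d"
| "tp a i \<pi> (Con c qs) d K F = ift (App (ISC c) (acc a i \<pi> d)) (tpl a i \<pi> c 0 qs (Suc d) K F) (F (Suc d))"
| "tp a i \<pi> (Fun f qs) d K F = bot_term g"
| "tpl a i \<pi> c j [] d K F = K d"
| "tpl a i \<pi> c j (q # qs) d K F = tp a i ((c, j) # \<pi>) q d (\<lambda>d'. tpl a i \<pi> c (Suc j) qs d' K F) F"

lemma test_eval: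
  assumes "cenv \<rho>'" "Acc a \<rho>' i \<pi> (Con c' us)" "c' < g" "\<forall>u\<in>set us. is_cterm g ca u" "length us = ca c'"
  shows "\<exists>jj. jj + 3 \<le> U \<and> redle (length \<pi> * U + jj) (inst (dep \<rho>' d) 0 (App (ISC c) (acc a i \<pi> d)))
            (if c' = c then TT else FF)"
proof -
  have a1: "redle (length \<pi> * U) (inst (dep \<rho>' d) 0 (App (ISC c) (acc a i \<pi> d))) (App (ISC c) (scott g (Con c' us)))"
    using assms(2) unfolding Acc_def by (simp add: redle_appR del: scott.simps)
  obtain jj where jj: "jj + 3 \<le> U" "red jj (App (ISC c) (scott g (Con c' us))) (if c' = c then TT else FF)"
    using ISC_scott[OF assms(3,4,5)] by blast
  from redle_trans[OF a1 redle_red[OF jj(2) order.refl]] jj(1) show ?thesis by blast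
qed

lemma tp_T:
  assumes cr: "cenv \<rho>'"
  shows "\<forall>w. is_pattern g ca p \<longrightarrow> is_cterm g ca w \<longrightarrow> pmatch p w \<longrightarrow> Acc a \<rho>' i \<pi> w \<longrightarrow> length \<pi> + tsz p \<le> Zb \<longrightarrow>
     (\<exists>d'. redle (tsz p * (Suc Zb * U)) (inst (dep \<rho>' d) 0 (tp a i \<pi> p d K F)) (inst (dep \<rho>' d') 0 (K d')))"
  and "\<forall>us. (\<forall>q\<in>set qs. is_pattern g ca q) \<longrightarrow> Acc a \<rho>' i \<pi> (Con c us) \<longrightarrow> c < g \<longrightarrow> (\<forall>u\<in>set us. is_cterm g ca u) \<longrightarrow>
     length us = ca c \<longrightarrow> j + length qs = length us \<longrightarrow> list_all2 pmatch qs (drop j us) \<longrightarrow>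
     length \<pi> + Suc (sum_list (map tsz qs)) \<le> Zb \<longrightarrow>
     (\<exists>d'. redle (sum_list (map tsz qs) * (Suc Zb * U)) (inst (dep \<rho>' d) 0 (tpl a i \<pi> c j qs d K F)) (inst (dep \<rho>' d') 0 (K d')))"
proof (induction a i \<pi> p d K F and a i \<pi> c j qs d K F rule: tp_tpl.induct)
  case (1 a i \<pi> x d K F)
  then show ?case by (auto intro: redle_refl)
next
  case (2 a i \<pi> c qs d K F)
  show ?case
  proof (intro allI impI)
    fix w :: "'v rterm"
    assume p: "is_pattern g ca (Con c qs)" and cw: "is_cterm g ca w" and pm: "pmatch (Con c qs) w"
      and ac: "Acc a \<rho>' i \<pi> w" and le: "length \<pi> + tsz (Con c qs) \<le> Zb"
    obtain us where w: "w = Con c us" "list_all2 pmatch qs us"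
      using pm by (cases w) (auto simp: pmatchl_eq)
    have cu: "c < g" "length us = ca c" "\<forall>u\<in>set us. is_cterm g ca u" using cw w by auto
    obtain jj where jj: "jj + 3 \<le> U" "redle (length \<pi> * U + jj) (inst (dep \<rho>' d) 0 (App (ISC c) (acc a i \<pi> d))) TT"
      using test_eval[OF cr ac[unfolded w] cu(1,3,2), where c=c and d=d] by auto
    have 1: "redle (length \<pi> * U + jj + 3) (inst (dep \<rho>' d) 0 (tp a i \<pi> (Con c qs) d K F))
       (inst (dep \<rho>' (Suc d)) 0 (tpl a i \<pi> c 0 qs (Suc d) K F))"
      using ift_T[OF cenv_dep[OF cr] jj(2)] by (simp add: dep_dep1)
    obtain d' where 2: "redle (sum_list (map tsz qs) * (Suc Zb * U)) (inst (dep \<rho>' (Suc d)) 0 (tpl a i \<pi> c 0 qs (Suc d) K F))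
       (inst (dep \<rho>' d') 0 (K d'))"
      using 2[rule_format, of us] p ac w cu le by auto
    have "length \<pi> * U + jj + 3 \<le> Suc Zb * U"
    proof -
      have "length \<pi> \<le> Zb" using le by simp
      then have "length \<pi> * U \<le> Zb * U" by simp
      then show ?thesis using jj(1) by (simp only: mult_Suc)
    qed
    then have "length \<pi> * U + jj + 3 + sum_list (map tsz qs) * (Suc Zb * U) \<le> tsz (Con c qs) * (Suc Zb * U)"
      by simp
    with redle_trans[OF 1 2] show "\<exists>d'. redle (tsz (Con c qs) * (Suc Zb * U)) (inst (dep \<rho>' d) 0 (tp a i \<pi> (Con c qs) d K F)) (inst (dep \<rho>' d') 0 (K d'))"
      by (blast intro: redle_mono)
  qed
next
  case (3 a i \<pi> f qs d K F)
  then show ?case by simp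
next
  case (4 a i \<pi> c j d K F)
  then show ?case by (auto intro: redle_refl)
next
  case (5 a i \<pi> c j q qs d K F)
  show ?case
  proof (intro allI impI)
    fix us :: "'v rterm list"
    assume ps: "\<forall>q\<in>set (q # qs). is_pattern g ca q" and ac: "Acc a \<rho>' i \<pi> (Con c us)" and c: "c < g"
      and cu: "\<forall>u\<in>set us. is_cterm g ca u" and lu: "length us = ca c" and lj: "j + length (q # qs) = length us"
      and la: "list_all2 pmatch (q # qs) (drop j us)"
      and le: "length \<pi> + Suc (sum_list (map tsz (q # qs))) \<le> Zb"
    have jl: "j < length us" using lj by simp
    have dr: "drop j us = us ! j # drop (Suc j) us" using jl by (simp add: Cons_nth_drop_Suc)
    have pm: "pmatch q (us ! j)" "list_all2 pmatch qs (drop (Suc j) us)" using la dr by auto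
    have acj: "Acc a \<rho>' i ((c, j) # \<pi>) (us ! j)" using Acc_child[OF ac c cu lu] jl lu by simp
    have cuj: "is_cterm g ca (us ! j)" using cu jl by simp
    obtain d1 where 1: "redle (tsz q * (Suc Zb * U)) (inst (dep \<rho>' d) 0 (tp a i ((c, j) # \<pi>) q d (\<lambda>d'. tpl a i \<pi> c (Suc j) qs d' K F) F))
        (inst (dep \<rho>' d1) 0 (tpl a i \<pi> c (Suc j) qs d1 K F))"
      using "5.IH"(2)[rule_format, OF _ cuj pm(1) acj] ps le by auto
    obtain d' where 2: "redle (sum_list (map tsz qs) * (Suc Zb * U)) (inst (dep \<rho>' d1) 0 (tpl a i \<pi> c (Suc j) qs d1 K F))
        (inst (dep \<rho>' d') 0 (K d'))"
      using "5.IH"(1)[of d1, rule_format, of us] ps ac c cu lu lj pm(2) le by auto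
    from redle_trans[OF 1 2] show "\<exists>d'. redle (sum_list (map tsz (q # qs)) * (Suc Zb * U)) (inst (dep \<rho>' d) 0 (tpl a i \<pi> c j (q # qs) d K F)) (inst (dep \<rho>' d') 0 (K d'))"
      by (auto simp: algebra_simps)
  qed
qed

end



context sys begin

lemma tp_F:
  assumes cr: "cenv \<rho>'"
  shows "\<forall>w. is_pattern g ca p \<longrightarrow> is_cterm g ca w \<longrightarrow> \<not> pmatch p w \<longrightarrow> Acc a \<rho>' i \<pi> w \<longrightarrow> length \<pi> + tsz p \<le> Zb \<longrightarrow>
     (\<exists>d'. redle (tsz p * (Suc Zb * U)) (inst (dep \<rho>' d) 0 (tp a i \<pi> p d K F)) (inst (dep \<rho>' d') 0 (F d')))"
  and "\<forall>us. (\<forall>q\<in>set qs. is_pattern g ca q) \<longrightarrow> Acc a \<rho>' i \<pi> (Con c us) \<longrightarrow> c < g \<longrightarrow> (\<forall>u\<in>set us. is_cterm g ca u) \<longrightarrow>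
     length us = ca c \<longrightarrow> j + length qs = length us \<longrightarrow> \<not> list_all2 pmatch qs (drop j us) \<longrightarrow>
     length \<pi> + Suc (sum_list (map tsz qs)) \<le> Zb \<longrightarrow>
     (\<exists>d'. redle (sum_list (map tsz qs) * (Suc Zb * U)) (inst (dep \<rho>' d) 0 (tpl a i \<pi> c j qs d K F)) (inst (dep \<rho>' d') 0 (F d')))"
proof (induction a i \<pi> p d K F and a i \<pi> c j qs d K F rule: tp_tpl.induct)
  case (1 a i \<pi> x d K F)
  then show ?case by simp
next
  case (2 a i \<pi> c qs d K F)
  show ?case
  proof (intro allI impI)
    fix w :: "'v rterm"
    assume p: "is_pattern g ca (Con c qs)" and cw: "is_cterm g ca w" and pm: "\<not> pmatch (Con c qs) w"
      and ac: "Acc a \<rho>' i \<pi> w" and le: "length \<pi> + tsz (Con c qs) \<le> Zb"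
    obtain c' us where w: "w = Con c' us" "c' < g" "length us = ca c'" "\<forall>u\<in>set us. is_cterm g ca u"
      using cterm_Con[OF cw] by blast
    obtain jj where jj: "jj + 3 \<le> U" "redle (length \<pi> * U + jj) (inst (dep \<rho>' d) 0 (App (ISC c) (acc a i \<pi> d)))
          (if c' = c then TT else FF)"
      using test_eval[OF cr ac[unfolded w(1)] w(2,4,3), where c=c and d=d] by auto
    have cost: "length \<pi> * U + jj + 3 \<le> Suc Zb * U"
    proof -
      have "length \<pi> \<le> Zb" using le by simp
      then have "length \<pi> * U \<le> Zb * U" by simp
      then show ?thesis using jj(1) by (simp only: mult_Suc)
    qed
    show "\<exists>d'. redle (tsz (Con c qs) * (Suc Zb * U)) (inst (dep \<rho>' d) 0 (tp a i \<pi> (Con c qs) d K F)) (inst (dep \<rho>' d') 0 (F d'))"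
    proof (cases "c' = c")
      case False
      then have "redle (length \<pi> * U + jj + 3) (inst (dep \<rho>' d) 0 (tp a i \<pi> (Con c qs) d K F))
         (inst (dep \<rho>' (Suc d)) 0 (F (Suc d)))"
        using ift_F[OF cenv_dep[OF cr]] jj(2) by (simp add: dep_dep1)
      moreover have "length \<pi> * U + jj + 3 \<le> tsz (Con c qs) * (Suc Zb * U)" using cost by simp
      ultimately show ?thesis by (blast intro: redle_mono)
    next
      case True
      have 1: "redle (length \<pi> * U + jj + 3) (inst (dep \<rho>' d) 0 (tp a i \<pi> (Con c qs) d K F))
         (inst (dep \<rho>' (Suc d)) 0 (tpl a i \<pi> c 0 qs (Suc d) K F))"
        using ift_T[OF cenv_dep[OF cr]] jj(2) True by (simp add: dep_dep1)
      have nl: "\<not> list_all2 pmatch qs us" using pm w True by (simp add: pmatchl_eq)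
      obtain d' where 2: "redle (sum_list (map tsz qs) * (Suc Zb * U)) (inst (dep \<rho>' (Suc d)) 0 (tpl a i \<pi> c 0 qs (Suc d) K F))
         (inst (dep \<rho>' d') 0 (F d'))"
        using "2"[rule_format, of us] p ac w True le nl by auto
      have "length \<pi> * U + jj + 3 + sum_list (map tsz qs) * (Suc Zb * U) \<le> tsz (Con c qs) * (Suc Zb * U)"
        using cost by simp
      with redle_trans[OF 1 2] show ?thesis by (blast intro: redle_mono)
    qed
  qed
next
  case (3 a i \<pi> f qs d K F)
  then show ?case by simp
next
  case (4 a i \<pi> c j d K F)
  then show ?case by simp
next
  case (5 a i \<pi> c j q qs d K F)
  show ?case
  proof (intro allI impI)
    fix us :: "'v rterm list"
    assume ps: "\<forall>q\<in>set (q # qs). is_pattern g ca q" and ac: "Acc a \<rho>' i \<pi> (Con c us)" and c: "c < g"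
      and cu: "\<forall>u\<in>set us. is_cterm g ca u" and lu: "length us = ca c" and lj: "j + length (q # qs) = length us"
      and la: "\<not> list_all2 pmatch (q # qs) (drop j us)"
      and le: "length \<pi> + Suc (sum_list (map tsz (q # qs))) \<le> Zb"
    have jl: "j < length us" using lj by simp
    have dr: "drop j us = us ! j # drop (Suc j) us" using jl by (simp add: Cons_nth_drop_Suc)
    have acj: "Acc a \<rho>' i ((c, j) # \<pi>) (us ! j)" using Acc_child[OF ac c cu lu] jl lu by simp
    have cuj: "is_cterm g ca (us ! j)" using cu jl by simp
    show "\<exists>d'. redle (sum_list (map tsz (q # qs)) * (Suc Zb * U)) (inst (dep \<rho>' d) 0 (tpl a i \<pi> c j (q # qs) d K F)) (inst (dep \<rho>' d') 0 (F d'))"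
    proof (cases "pmatch q (us ! j)")
      case True
      then have nl: "\<not> list_all2 pmatch qs (drop (Suc j) us)" using la dr by auto
      obtain d1 where 1: "redle (tsz q * (Suc Zb * U)) (inst (dep \<rho>' d) 0 (tp a i ((c, j) # \<pi>) q d (\<lambda>d'. tpl a i \<pi> c (Suc j) qs d' K F) F))
          (inst (dep \<rho>' d1) 0 (tpl a i \<pi> c (Suc j) qs d1 K F))"
        using tp_T(1)[OF cr, rule_format, OF _ cuj True acj, of Zb d "\<lambda>d'. tpl a i \<pi> c (Suc j) qs d' K F" F] ps le by auto
      obtain d' where 2: "redle (sum_list (map tsz qs) * (Suc Zb * U)) (inst (dep \<rho>' d1) 0 (tpl a i \<pi> c (Suc j) qs d1 K F))
          (inst (dep \<rho>' d') 0 (F d'))"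
        using "5.IH"(1)[of d1, rule_format, of us] ps ac c cu lu lj nl le by auto
      from redle_trans[OF 1 2] show ?thesis by (auto simp: algebra_simps)
    next
      case False
      obtain d' where 1: "redle (tsz q * (Suc Zb * U)) (inst (dep \<rho>' d) 0 (tp a i ((c, j) # \<pi>) q d (\<lambda>d'. tpl a i \<pi> c (Suc j) qs d' K F) F))
          (inst (dep \<rho>' d') 0 (F d'))"
        using "5.IH"(2)[rule_format, OF _ cuj False acj] ps le by auto
      have "tsz q * (Suc Zb * U) \<le> sum_list (map tsz (q # qs)) * (Suc Zb * U)" by simp
      from redle_mono[OF 1 this] show ?thesis by auto
    qed
  qed
qed

fun tps :: "nat \<Rightarrow> nat \<Rightarrow> 'v rterm list \<Rightarrow> nat \<Rightarrow> (nat \<Rightarrow> lterm) \<Rightarrow> (nat \<Rightarrow> lterm) \<Rightarrow> lterm" where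
  "tps a j [] d K F = K d"
| "tps a j (p # ps) d K F = tp a j [] p d (\<lambda>d'. tps a (Suc j) ps d' K F) F"

lemma tps_T:
  assumes cr: "cenv \<rho>'"
  shows "length ws = length ps \<Longrightarrow>
    \<forall>k<length ps. is_pattern g ca (ps ! k) \<and> is_cterm g ca (ws ! k) \<and> Acc a \<rho>' (j + k) [] (ws ! k) \<and> tsz (ps ! k) \<le> Zb \<Longrightarrow>
    list_all2 pmatch ps ws \<Longrightarrow>
    \<exists>d'. redle (sum_list (map tsz ps) * (Suc Zb * U)) (inst (dep \<rho>' d) 0 (tps a j ps d K F)) (inst (dep \<rho>' d') 0 (K d'))"
proof (induction ps arbitrary: j ws d)
  case Nil then show ?case by (auto intro: redle_refl)
next
  case (Cons p ps)
  obtain w ws' where ws: "ws = w # ws'" using Cons.prems(1) by (cases ws) auto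
  have h0: "is_pattern g ca p" "is_cterm g ca w" "Acc a \<rho>' j [] w" "tsz p \<le> Zb"
    using Cons.prems(2)[rule_format, of 0] ws by auto
  have pm: "pmatch p w" "list_all2 pmatch ps ws'" using Cons.prems(3) ws by auto
  obtain d1 where 1: "redle (tsz p * (Suc Zb * U)) (inst (dep \<rho>' d) 0 (tps a j (p # ps) d K F))
      (inst (dep \<rho>' d1) 0 (tps a (Suc j) ps d1 K F))"
    using tp_T(1)[OF cr, rule_format, OF h0(1,2) pm(1) h0(3), of Zb d "\<lambda>d'. tps a (Suc j) ps d' K F" F] h0(4)
    by auto
  have h1: "\<forall>k<length ps. is_pattern g ca (ps ! k) \<and> is_cterm g ca (ws' ! k) \<and> Acc a \<rho>' (Suc j + k) [] (ws' ! k) \<and> tsz (ps ! k) \<le> Zb"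
  proof (intro allI impI)
    fix k assume "k < length ps"
    then show "is_pattern g ca (ps ! k) \<and> is_cterm g ca (ws' ! k) \<and> Acc a \<rho>' (Suc j + k) [] (ws' ! k) \<and> tsz (ps ! k) \<le> Zb"
      using Cons.prems(2)[rule_format, of "Suc k"] ws by auto
  qed
  obtain d' where 2: "redle (sum_list (map tsz ps) * (Suc Zb * U)) (inst (dep \<rho>' d1) 0 (tps a (Suc j) ps d1 K F))
      (inst (dep \<rho>' d') 0 (K d'))"
    using Cons.IH[of ws' "Suc j" d1] Cons.prems(1) ws h1 pm(2) by auto
  from redle_trans[OF 1 2] show ?case by (auto simp: algebra_simps)
qed

lemma tps_F:
  assumes cr: "cenv \<rho>'"
  shows "length ws = length ps \<Longrightarrow>
    \<forall>k<length ps. is_pattern g ca (ps ! k) \<and> is_cterm g ca (ws ! k) \<and> Acc a \<rho>' (j + k) [] (ws ! k) \<and> tsz (ps ! k) \<le> Zb \<Longrightarrow>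
    \<not> list_all2 pmatch ps ws \<Longrightarrow>
    \<exists>d'. redle (sum_list (map tsz ps) * (Suc Zb * U)) (inst (dep \<rho>' d) 0 (tps a j ps d K F)) (inst (dep \<rho>' d') 0 (F d'))"
proof (induction ps arbitrary: j ws d)
  case Nil then show ?case by simp
next
  case (Cons p ps)
  obtain w ws' where ws: "ws = w # ws'" using Cons.prems(1) by (cases ws) auto
  have h0: "is_pattern g ca p" "is_cterm g ca w" "Acc a \<rho>' j [] w" "tsz p \<le> Zb"
    using Cons.prems(2)[rule_format, of 0] ws by auto
  show ?case
  proof (cases "pmatch p w")
    case True
    then have pm: "\<not> list_all2 pmatch ps ws'" using Cons.prems(3) ws by auto
    obtain d1 where 1: "redle (tsz p * (Suc Zb * U)) (inst (dep \<rho>' d) 0 (tps a j (p # ps) d K F))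
        (inst (dep \<rho>' d1) 0 (tps a (Suc j) ps d1 K F))"
      using tp_T(1)[OF cr, rule_format, OF h0(1,2) True h0(3), of Zb d "\<lambda>d'. tps a (Suc j) ps d' K F" F] h0(4)
      by auto
    have h1: "\<forall>k<length ps. is_pattern g ca (ps ! k) \<and> is_cterm g ca (ws' ! k) \<and> Acc a \<rho>' (Suc j + k) [] (ws' ! k) \<and> tsz (ps ! k) \<le> Zb"
    proof (intro allI impI)
      fix k assume "k < length ps"
      then show "is_pattern g ca (ps ! k) \<and> is_cterm g ca (ws' ! k) \<and> Acc a \<rho>' (Suc j + k) [] (ws' ! k) \<and> tsz (ps ! k) \<le> Zb"
        using Cons.prems(2)[rule_format, of "Suc k"] ws by auto
    qed
    obtain d' where 2: "redle (sum_list (map tsz ps) * (Suc Zb * U)) (inst (dep \<rho>' d1) 0 (tps a (Suc j) ps d1 K F))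
        (inst (dep \<rho>' d') 0 (F d'))"
      using Cons.IH[of ws' "Suc j" d1] Cons.prems(1) ws h1 pm by auto
    from redle_trans[OF 1 2] show ?thesis by (auto simp: algebra_simps)
  next
    case False
    obtain d' where 1: "redle (tsz p * (Suc Zb * U)) (inst (dep \<rho>' d) 0 (tps a j (p # ps) d K F))
        (inst (dep \<rho>' d') 0 (F d'))"
      using tp_F(1)[OF cr, rule_format, OF h0(1,2) False h0(3), of Zb d "\<lambda>d'. tps a (Suc j) ps d' K F" F] h0(4)
      by auto
    have "tsz p * (Suc Zb * U) \<le> sum_list (map tsz (p # ps)) * (Suc Zb * U)" by simp
    from redle_mono[OF 1 this] show ?thesis by auto
  qed
qed

end



lemma list_choice: "\<forall>t\<in>set ts. \<exists>M p. P t M p \<Longrightarrow>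
  \<exists>Ms ps. length Ms = length ts \<and> length ps = length ts \<and> (\<forall>i<length ts. P (ts ! i) (Ms ! i) (ps ! i))"
proof (induction ts)
  case Nil then show ?case by simp
next
  case (Cons t ts)
  obtain M p where mp: "P t M p" using Cons.prems by auto
  obtain Ms ps where h: "length Ms = length ts" "length ps = length ts" "\<forall>i<length ts. P (ts ! i) (Ms ! i) (ps ! i)"
    using Cons by auto
  show ?case
    by (rule exI[of _ "M # Ms"], rule exI[of _ "p # ps"]) (use mp h in \<open>auto simp: nth_Cons split: nat.split\<close>)
qed

context sys begin

fun vp :: "(nat \<times> nat) list \<Rightarrow> 'v rterm \<Rightarrow> 'v \<Rightarrow> (nat \<times> nat) list option"
and vpl :: "(nat \<times> nat) list \<Rightarrow> nat \<Rightarrow> nat \<Rightarrow> 'v rterm list \<Rightarrow> 'v \<Rightarrow> (nat \<times> nat) list option" where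
  "vp \<pi> (RVar y) x = (if x = y then Some \<pi> else None)"
| "vp \<pi> (Con c qs) x = vpl \<pi> c 0 qs x"
| "vp \<pi> (Fun f qs) x = None"
| "vpl \<pi> c j [] x = None"
| "vpl \<pi> c j (q # qs) x = (case vp ((c, j) # \<pi>) q x of None \<Rightarrow> vpl \<pi> c (Suc j) qs x | Some \<pi>' \<Rightarrow> Some \<pi>')"

lemma vp_None:
  shows "x \<notin> set (rvars p) \<longrightarrow> vp \<pi> p x = None"
  and "x \<notin> (\<Union>q\<in>set qs. set (rvars q)) \<longrightarrow> vpl \<pi> c j qs x = None"
  by (induction \<pi> p x and \<pi> c j qs x rule: vp_vpl.induct) auto

lemma vp_ok:
  shows "\<forall>w. is_pattern g ca p \<longrightarrow> rsubst \<sigma> p = w \<longrightarrow> is_cterm g ca w \<longrightarrow> Acc a \<rho>' i \<pi> w \<longrightarrow> x \<in> set (rvars p) \<longrightarrow>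
     (\<exists>\<pi>'. vp \<pi> p x = Some \<pi>' \<and> Acc a \<rho>' i \<pi>' (\<sigma> x) \<and> is_cterm g ca (\<sigma> x) \<and> length \<pi>' \<le> length \<pi> + tsz p)"
  and "\<forall>us. (\<forall>q\<in>set qs. is_pattern g ca q) \<longrightarrow> Acc a \<rho>' i \<pi> (Con c us) \<longrightarrow> c < g \<longrightarrow> length us = ca c \<longrightarrow>
     (\<forall>u\<in>set us. is_cterm g ca u) \<longrightarrow> j + length qs = length us \<longrightarrow> map (rsubst \<sigma>) qs = drop j us \<longrightarrow>
     x \<in> (\<Union>q\<in>set qs. set (rvars q)) \<longrightarrow>
     (\<exists>\<pi>'. vpl \<pi> c j qs x = Some \<pi>' \<and> Acc a \<rho>' i \<pi>' (\<sigma> x) \<and> is_cterm g ca (\<sigma> x) \<and> length \<pi>' \<le> length \<pi> + Suc (sum_list (map tsz qs)))"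
proof (induction \<pi> p x and \<pi> c j qs x rule: vp_vpl.induct)
  case (1 \<pi> y x)
  then show ?case by auto
next
  case (2 \<pi> c qs x)
  show ?case
  proof (intro allI impI)
    fix w :: "'v rterm"
    assume p: "is_pattern g ca (Con c qs)" and e: "rsubst \<sigma> (Con c qs) = w" and cw: "is_cterm g ca w"
      and ac: "Acc a \<rho>' i \<pi> w" and x: "x \<in> set (rvars (Con c qs))"
    have h: "c < g" "length (map (rsubst \<sigma>) qs) = ca c" "\<forall>u\<in>set (map (rsubst \<sigma>) qs). is_cterm g ca u"
      using cw e by auto
    show "\<exists>\<pi>'. vp \<pi> (Con c qs) x = Some \<pi>' \<and> Acc a \<rho>' i \<pi>' (\<sigma> x) \<and> is_cterm g ca (\<sigma> x) \<and> length \<pi>' \<le> length \<pi> + tsz (Con c qs)"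
      using "2"[rule_format, of "map (rsubst \<sigma>) qs"] p ac e h x by auto
  qed
next
  case (3 \<pi> f qs x)
  then show ?case by simp
next
  case (4 \<pi> c j x)
  then show ?case by simp
next
  case (5 \<pi> c j q qs x)
  show ?case
  proof (intro allI impI)
    fix us :: "'v rterm list"
    assume ps: "\<forall>q\<in>set (q # qs). is_pattern g ca q" and ac: "Acc a \<rho>' i \<pi> (Con c us)" and c: "c < g"
      and lu: "length us = ca c" and cu: "\<forall>u\<in>set us. is_cterm g ca u" and lj: "j + length (q # qs) = length us"
      and m: "map (rsubst \<sigma>) (q # qs) = drop j us" and x: "x \<in> (\<Union>q\<in>set (q # qs). set (rvars q))"
    have jl: "j < length us" using lj by simp
    have dr: "drop j us = us ! j # drop (Suc j) us" using jl by (simp add: Cons_nth_drop_Suc)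
    have m1: "rsubst \<sigma> q = us ! j" "map (rsubst \<sigma>) qs = drop (Suc j) us" using m dr by auto
    have acj: "Acc a \<rho>' i ((c, j) # \<pi>) (us ! j)" using Acc_child[OF ac c cu lu] jl lu by simp
    have cuj: "is_cterm g ca (us ! j)" using cu jl by simp
    show "\<exists>\<pi>'. vpl \<pi> c j (q # qs) x = Some \<pi>' \<and> Acc a \<rho>' i \<pi>' (\<sigma> x) \<and> is_cterm g ca (\<sigma> x) \<and>
       length \<pi>' \<le> length \<pi> + Suc (sum_list (map tsz (q # qs)))"
    proof (cases "x \<in> set (rvars q)")
      case True
      obtain \<pi>' where r: "vp ((c, j) # \<pi>) q x = Some \<pi>'" "Acc a \<rho>' i \<pi>' (\<sigma> x)" "is_cterm g ca (\<sigma> x)"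
        "length \<pi>' \<le> length ((c, j) # \<pi>) + tsz q"
        using "5.IH"(1)[rule_format, OF _ m1(1) cuj acj True] ps by auto
      then show ?thesis by auto
    next
      case False
      then have vn: "vp ((c, j) # \<pi>) q x = None" using vp_None(1) by blast
      have x2: "x \<in> (\<Union>q\<in>set qs. set (rvars q))" using x False by auto
      obtain \<pi>' where r: "vpl \<pi> c (Suc j) qs x = Some \<pi>'" "Acc a \<rho>' i \<pi>' (\<sigma> x)" "is_cterm g ca (\<sigma> x)"
        "length \<pi>' \<le> length \<pi> + Suc (sum_list (map tsz qs))"
        using "5.IH"(2)[OF vn, rule_format, of us] ps ac c lu cu lj m1(2) x2 by auto
      then show ?thesis using vn by auto
    qed
  qed
qed

fun vps :: "nat \<Rightarrow> 'v rterm list \<Rightarrow> 'v \<Rightarrow> (nat \<times> (nat \<times> nat) list) option" where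
  "vps j [] x = None"
| "vps j (p # ps) x = (case vp [] p x of None \<Rightarrow> vps (Suc j) ps x | Some \<pi> \<Rightarrow> Some (j, \<pi>))"

lemma vps_ok:
  "length ws = length ps \<Longrightarrow>
   \<forall>k<length ps. is_pattern g ca (ps ! k) \<and> rsubst \<sigma> (ps ! k) = ws ! k \<and> is_cterm g ca (ws ! k) \<and>
      Acc a \<rho>' (j + k) [] (ws ! k) \<and> tsz (ps ! k) \<le> Zb \<Longrightarrow>
   x \<in> (\<Union>p\<in>set ps. set (rvars p)) \<Longrightarrow>
   \<exists>i \<pi>'. vps j ps x = Some (i, \<pi>') \<and> Acc a \<rho>' i \<pi>' (\<sigma> x) \<and> is_cterm g ca (\<sigma> x) \<and> length \<pi>' \<le> Zb"
proof (induction ps arbitrary: j ws)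
  case Nil then show ?case by simp
next
  case (Cons p ps)
  obtain w ws' where ws: "ws = w # ws'" using Cons.prems(1) by (cases ws) auto
  have h0: "is_pattern g ca p" "rsubst \<sigma> p = w" "is_cterm g ca w" "Acc a \<rho>' j [] w" "tsz p \<le> Zb"
    using Cons.prems(2)[rule_format, of 0] ws by auto
  show ?case
  proof (cases "x \<in> set (rvars p)")
    case True
    have "\<exists>\<pi>'. vp [] p x = Some \<pi>' \<and> Acc a \<rho>' j \<pi>' (\<sigma> x) \<and> is_cterm g ca (\<sigma> x) \<and> length \<pi>' \<le> length [] + tsz p"
      using vp_ok(1)[where p=p and \<sigma>=\<sigma> and a=a and \<rho>'=\<rho>' and i=j and \<pi>="[]" and x=x, rule_format, OF h0(1,2,3,4) True]
      by simp
    then obtain \<pi>' where r: "vp [] p x = Some \<pi>'" "Acc a \<rho>' j \<pi>' (\<sigma> x)" "is_cterm g ca (\<sigma> x)" "length \<pi>' \<le> length [] + tsz p"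
      by blast
    then show ?thesis using h0(5) by auto
  next
    case False
    then have "vp [] p x = None" using vp_None(1) by blast
    moreover have h1: "\<forall>k<length ps. is_pattern g ca (ps ! k) \<and> rsubst \<sigma> (ps ! k) = ws' ! k \<and> is_cterm g ca (ws' ! k) \<and>
      Acc a \<rho>' (Suc j + k) [] (ws' ! k) \<and> tsz (ps ! k) \<le> Zb"
    proof (intro allI impI)
      fix k assume "k < length ps"
      then show "is_pattern g ca (ps ! k) \<and> rsubst \<sigma> (ps ! k) = ws' ! k \<and> is_cterm g ca (ws' ! k) \<and>
        Acc a \<rho>' (Suc j + k) [] (ws' ! k) \<and> tsz (ps ! k) \<le> Zb"
        using Cons.prems(2)[rule_format, of "Suc k"] ws by auto
    qed
    moreover have "length ws' = length ps" using Cons.prems(1) ws by simp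
    moreover have "x \<in> (\<Union>p\<in>set ps. set (rvars p))" using Cons.prems(3) False by simp
    ultimately obtain i \<pi>' where "vps (Suc j) ps x = Some (i, \<pi>')" "Acc a \<rho>' i \<pi>' (\<sigma> x)" "is_cterm g ca (\<sigma> x)" "length \<pi>' \<le> Zb"
      using Cons.IH[of ws' "Suc j"] by blast
    then show ?thesis using \<open>vp [] p x = None\<close> by simp
  qed
qed

definition SEL :: "nat \<Rightarrow> lterm" where "SEL f = abss h (LVar (h - Suc f))"

fun cr :: "nat \<Rightarrow> 'v rterm list \<Rightarrow> nat \<Rightarrow> 'v rterm \<Rightarrow> lterm" where
  "cr a ps d (RVar x) = (case vps 0 ps x of Some (i, \<pi>) \<Rightarrow> acc a i \<pi> d | None \<Rightarrow> I0)"
| "cr a ps d (Con c ts) = apps (CC c) (map (cr a ps d) ts)"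
| "cr a ps d (Fun f ts) = apps (App (App (LVar (d + a)) (SEL f)) (LVar (d + a))) (map (cr a ps d) ts)"

fun tryr :: "nat \<Rightarrow> nat \<Rightarrow> 'v rule list \<Rightarrow> lterm" where
  "tryr a d [] = bot_term g"
| "tryr a d (\<rho> # rs) = tps a 0 (fst (snd \<rho>)) d (\<lambda>d'. cr a (fst (snd \<rho>)) d' (snd (snd \<rho>))) (\<lambda>d'. tryr a d' rs)"

definition rules :: "nat \<Rightarrow> 'v rule list" where "rules f = filter (\<lambda>\<rho>. fst \<rho> = f) R"
definition body :: "nat \<Rightarrow> lterm" where "body f = chk (fa f) 0 [0..<fa f] (\<lambda>d. tryr (fa f) d (rules f))"
definition CodeV :: "nat \<Rightarrow> lterm" where "CodeV f = inst rhoI 0 (Abs (abss (fa f) (body f)))"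
definition Dv :: lterm where "Dv = Abs (apps (LVar 0) (map CodeV [0..<h]))"
definition FC :: "nat \<Rightarrow> lterm" where "FC f = App (CodeV f) Dv"

lemma CodeV_cl: "closedb 0 (CodeV f)" "is_value (CodeV f)"
  unfolding CodeV_def by (rule closedb_inst[OF cenv_rhoI]) simp

lemma CodeV_inst[simp]: "inst \<rho> k (CodeV f) = CodeV f"
  by (rule inst_closed[OF CodeV_cl(1)]) simp

lemma Dv_cl: "closedb 0 Dv" "is_value Dv"
  unfolding Dv_def using CodeV_cl(1) by (auto intro: closedb_mono[of 0])

lemma Dv_inst[simp]: "inst \<rho> k Dv = Dv"
  by (rule inst_closed[OF Dv_cl(1)]) simp

lemma CC_cl: "closedb 0 (CC c)"
  unfolding CC_def using closedb_inst[OF cenv_rhoI] by blast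
lemma CC_inst[simp]: "inst \<rho> k (CC c) = CC c"
  by (rule inst_closed[OF CC_cl]) simp

lemma SEL_cl: "f < h \<Longrightarrow> closedb 0 (SEL f) \<and> is_value (SEL f)"
  unfolding SEL_def by (cases h) auto
lemma SEL_inst[simp]: "f < h \<Longrightarrow> inst \<rho> k (SEL f) = SEL f"
  by (rule inst_closed[OF conjunct1[OF SEL_cl]]) simp_all

lemma Dv_sel: assumes "f < h" shows "redle (Suc h) (App (App Dv (SEL f)) Dv) (FC f)"
proof -
  have cs: "closedb 0 (SEL f)" "is_value (SEL f)" using SEL_cl[OF assms] by auto
  have "beta_v (App (inst rhoI 0 Dv) (SEL f)) (inst (econs (SEL f) rhoI) 0 (apps (LVar 0) (map CodeV [0..<h])))"
    unfolding Dv_def by (rule beta_inst[OF cenv_rhoI cs])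
  moreover have "inst (econs (SEL f) rhoI) 0 (apps (LVar 0) (map CodeV [0..<h])) = apps (SEL f) (map CodeV [0..<h])"
  proof -
    have "map (inst (econs (SEL f) rhoI) 0) (map CodeV [0..<h]) = map CodeV [0..<h]"
      by (simp add: comp_def)
    then show ?thesis by (simp add: econs_def comp_def)
  qed
  ultimately have 1: "red 1 (App Dv (SEL f)) (apps (SEL f) (map CodeV [0..<h]))" by (simp add: red1)
  have cl: "\<forall>V\<in>set (map CodeV [0..<h]). closedb 0 V \<and> is_value V" using CodeV_cl by auto
  have "inst rhoI 0 (abss (length (map CodeV [0..<h])) (LVar (h - Suc f))) = SEL f"
    using SEL_inst[OF assms, of rhoI 0] by (simp only: SEL_def length_map length_upt diff_zero)
  then have 2: "red h (apps (SEL f) (map CodeV [0..<h])) (inst (pushl (map CodeV [0..<h]) rhoI) 0 (LVar (h - Suc f)))"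
    using apps_abss[OF cenv_rhoI cl, of "LVar (h - Suc f)"] by simp
  have "inst (pushl (map CodeV [0..<h]) rhoI) 0 (LVar (h - Suc f)) = CodeV f"
    using assms by (simp add: pushl_nth rev_nth)
  with red_add[OF 1 2] have "red (Suc h) (App Dv (SEL f)) (CodeV f)" by simp
  then show ?thesis unfolding FC_def by (intro redle_appL redle_red) auto
qed

inductive rep :: "lterm \<Rightarrow> 'v rterm \<Rightarrow> nat \<Rightarrow> bool" where
  rsc: "is_cterm g ca t \<Longrightarrow> rep (scott g t) t 0"
| rcon: "c < g \<Longrightarrow> length ts = ca c \<Longrightarrow> length Ms = length ts \<Longrightarrow> length ps = length ts \<Longrightarrow>
    (\<forall>i<length ts. rep (Ms ! i) (ts ! i) (ps ! i)) \<Longrightarrow> rep (apps (CC c) Ms) (Con c ts) (Suc (sum_list ps))"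
| rfun: "f < h \<Longrightarrow> length ts = fa f \<Longrightarrow> length Ms = length ts \<Longrightarrow> length ps = length ts \<Longrightarrow>
    (\<forall>i<length ts. rep (Ms ! i) (ts ! i) (ps ! i)) \<Longrightarrow> rep (apps (FC f) Ms) (Fun f ts) (sum_list ps)"

end



lemma sum_list_le_nth: "length xs = length ys \<Longrightarrow> (\<forall>i<length xs. xs ! i \<le> ys ! i) \<Longrightarrow> sum_list xs \<le> sum_list (ys :: nat list)"
proof (induction xs ys rule: list_induct2)
  case Nil then show ?case by simp
next
  case (Cons x xs y ys)
  have "x \<le> y" using Cons.prems[rule_format, of 0] by simp
  moreover have "sum_list xs \<le> sum_list ys" using Cons.IH Cons.prems by force
  ultimately show ?case by simp
qed

lemma rsubst_cong: "(\<forall>x\<in>set (rvars t). \<sigma> x = \<sigma>' x) \<Longrightarrow> rsubst \<sigma> t = rsubst \<sigma>' t"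
  by (induction t) auto

context sys begin

lemma sub_cterm: "rsubst \<sigma> p = w \<Longrightarrow> is_cterm g ca (w::'v rterm) \<Longrightarrow> x \<in> set (rvars p) \<Longrightarrow> is_cterm g ca (\<sigma> x)"
proof (induction p arbitrary: w)
  case (Con c ts)
  then show ?case by auto
next
  case (Fun f ts)
  then show ?case by auto
qed auto

lemma pm_rsubst: "is_pattern g ca (p::'v rterm) \<Longrightarrow> pmatch p (rsubst \<sigma> p)"
proof (induction p)
  case (Con c ts)
  then show ?case by (auto simp: pmatchl_eq list_all2_conv_all_nth)
qed auto

lemma merge:
  "length ws = length ps \<Longrightarrow> distinct (concat (map rvars ps)) \<Longrightarrow>
   (\<forall>k<length ps. \<exists>\<sigma>. rsubst \<sigma> (ps ! k) = ws ! k) \<Longrightarrow> \<exists>\<sigma>. map (rsubst \<sigma>) ps = (ws :: 'v rterm list)"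
proof (induction ps arbitrary: ws)
  case Nil then show ?case by simp
next
  case (Cons p ps)
  obtain w ws' where ws: "ws = w # ws'" using Cons.prems(1) by (cases ws) auto
  obtain \<sigma>1 where s1: "rsubst \<sigma>1 p = w" using Cons.prems(3)[rule_format, of 0] ws by auto
  have "\<forall>k<length ps. \<exists>\<sigma>. rsubst \<sigma> (ps ! k) = ws' ! k"
    using Cons.prems(3) ws by (metis Suc_less_eq length_Cons nth_Cons_Suc)
  then obtain \<sigma>2 where s2: "map (rsubst \<sigma>2) ps = ws'" using Cons.IH Cons.prems(1,2) ws by auto
  define \<sigma> where "\<sigma> x = (if x \<in> set (rvars p) then \<sigma>1 x else \<sigma>2 x)" for x
  have "rsubst \<sigma> p = w" using s1 rsubst_cong[of p \<sigma> \<sigma>1] by (simp add: \<sigma>_def)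
  moreover have "map (rsubst \<sigma>) ps = ws'"
  proof -
    have "\<forall>q\<in>set ps. rsubst \<sigma> q = rsubst \<sigma>2 q"
    proof
      fix q assume q: "q \<in> set ps"
      have "set (rvars p) \<inter> set (rvars q) = {}" using Cons.prems(2) q by auto
      then show "rsubst \<sigma> q = rsubst \<sigma>2 q" by (intro rsubst_cong) (auto simp: \<sigma>_def)
    qed
    then have "map (rsubst \<sigma>) ps = map (rsubst \<sigma>2) ps" by (intro map_cong) auto
    then show ?thesis using s2 by simp
  qed
  ultimately show ?case using ws by auto
qed

lemma pm_sigma: "is_pattern g ca p \<Longrightarrow> pmatch p w \<Longrightarrow> is_cterm g ca w \<Longrightarrow> distinct (rvars p) \<Longrightarrow>
   \<exists>\<sigma>. rsubst \<sigma> p = (w :: 'v rterm)"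
proof (induction p arbitrary: w)
  case (RVar x)
  then show ?case by (intro exI[of _ "\<lambda>_. w"]) simp
next
  case (Con c qs)
  obtain us where w: "w = Con c us" "list_all2 pmatch qs us"
    using Con.prems(2) by (cases w) (auto simp: pmatchl_eq)
  have l: "length us = length qs" using w(2) list_all2_lengthD by metis
  have "\<forall>k<length qs. \<exists>\<sigma>. rsubst \<sigma> (qs ! k) = us ! k"
  proof (intro allI impI)
    fix k assume k: "k < length qs"
    have "distinct (rvars (qs ! k))"
      using Con.prems(4) k by (auto simp: distinct_concat_iff)
    then show "\<exists>\<sigma>. rsubst \<sigma> (qs ! k) = us ! k"
      using Con.IH[of "qs ! k" "us ! k"] Con.prems(1,3) w k l
      by (auto simp: list_all2_conv_all_nth)
  qed
  then obtain \<sigma> where "map (rsubst \<sigma>) qs = us"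
    using merge[of us qs] l Con.prems(4) by auto
  then show ?case using w by auto
next
  case (Fun f ts)
  then show ?case by simp
qed

end



context sys begin

definition fr :: "lterm list \<Rightarrow> nat \<Rightarrow> lterm" where
  "fr vs = pushl vs (econs Dv rhoI)"

lemma cenv_fr: "\<forall>v\<in>set vs. closedb 0 v \<and> is_value v \<Longrightarrow> cenv (fr vs)"
  unfolding fr_def using Dv_cl by (intro cenv_pushl cenv_econs cenv_rhoI) auto

lemma fr_Dv: "fr vs (length vs) = Dv"
  by (simp add: fr_def pushl_nth econs_def)

lemma rhs_eval:
  assumes len: "length vs = length ps" "length ws = length ps"
    and args: "\<forall>k<length ps. is_pattern g ca (ps ! k) \<and> rsubst \<sigma> (ps ! k) = ws ! k \<and> is_cterm g ca (ws ! k) \<and>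
       vs ! k = scott g (ws ! k) \<and> tsz (ps ! k) \<le> Zb"
  shows "wf_term g h ca fa r \<Longrightarrow> set (rvars r) \<subseteq> (\<Union>p\<in>set ps. set (rvars p)) \<Longrightarrow>
    \<exists>M' p'. redle (tsz r * (Zb * U + Suc h)) (inst (dep (fr vs) d) 0 (cr (length ps) ps d r)) M' \<and>
        rep M' (rsubst \<sigma> r) p' \<and> p' \<le> tsz r"
proof (induction r)
  case (RVar x)
  have ac: "\<forall>k<length ps. is_pattern g ca (ps ! k) \<and> rsubst \<sigma> (ps ! k) = ws ! k \<and> is_cterm g ca (ws ! k) \<and>
      Acc (length ps) (fr vs) (0 + k) [] (ws ! k) \<and> tsz (ps ! k) \<le> Zb"
    using args len unfolding fr_def by (auto intro: Acc_arg)
  have x: "x \<in> (\<Union>p\<in>set ps. set (rvars p))" using RVar.prems by simp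
  obtain i \<pi>' where v: "vps 0 ps x = Some (i, \<pi>')" "Acc (length ps) (fr vs) i \<pi>' (\<sigma> x)" "is_cterm g ca (\<sigma> x)" "length \<pi>' \<le> Zb"
    using vps_ok[OF len(2) ac x] by blast
  have "redle (length \<pi>' * U) (inst (dep (fr vs) d) 0 (cr (length ps) ps d (RVar x))) (scott g (\<sigma> x))"
    using v(1,2) unfolding Acc_def by simp
  moreover have "length \<pi>' * U \<le> tsz (RVar x) * (Zb * U + Suc h)"
  proof -
    have "length \<pi>' * U \<le> Zb * U" using v(4) by simp
    then show ?thesis by (simp only: tsz.simps mult_1)
  qed
  ultimately show ?case using rep.rsc[OF v(3)] by (auto intro: redle_mono)
next
  case (Con c ts)
  have w: "c < g" "length ts = ca c" "\<forall>t\<in>set ts. wf_term g h ca fa t" using Con.prems(1) by auto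
  have "\<forall>t\<in>set ts. \<exists>M p. redle (tsz t * (Zb * U + Suc h)) (inst (dep (fr vs) d) 0 (cr (length ps) ps d t)) M \<and>
        rep M (rsubst \<sigma> t) p \<and> p \<le> tsz t"
    using Con.IH Con.prems w(3) by fastforce
  from list_choice[OF this] obtain Ms qs where ch: "length Ms = length ts" "length qs = length ts"
    "\<forall>i<length ts. redle (tsz (ts ! i) * (Zb * U + Suc h)) (inst (dep (fr vs) d) 0 (cr (length ps) ps d (ts ! i))) (Ms ! i) \<and>
        rep (Ms ! i) (rsubst \<sigma> (ts ! i)) (qs ! i) \<and> qs ! i \<le> tsz (ts ! i)"
    by blast
  let ?V = "Zb * U + Suc h"
  have 1: "redle (sum_list (map (\<lambda>t. tsz t * ?V) ts)) (apps (CC c) (map (\<lambda>t. inst (dep (fr vs) d) 0 (cr (length ps) ps d t)) ts)) (apps (CC c) Ms)"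
    by (rule redle_apps_args) (use ch in auto)
  have e: "inst (dep (fr vs) d) 0 (cr (length ps) ps d (Con c ts)) = apps (CC c) (map (\<lambda>t. inst (dep (fr vs) d) 0 (cr (length ps) ps d t)) ts)"
    by (simp add: comp_def)
  have r: "rep (apps (CC c) Ms) (rsubst \<sigma> (Con c ts)) (Suc (sum_list qs))"
    using ch w by (auto intro!: rep.rcon)
  have "sum_list qs \<le> sum_list (map tsz ts)"
    by (rule sum_list_le_nth) (use ch in auto)
  moreover have "sum_list (map (\<lambda>t. tsz t * ?V) ts) \<le> tsz (Con c ts) * ?V"
  proof -
    have sm: "sum_list (map (\<lambda>t. tsz t * ?V) ts) = sum_list (map tsz ts) * ?V" by (rule sum_list_mult_const)
    show ?thesis unfolding sm tsz.simps mult_Suc by simp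
  qed
  ultimately show ?case using 1 e r by (auto intro: redle_mono)
next
  case (Fun f ts)
  have w: "f < h" "length ts = fa f" "\<forall>t\<in>set ts. wf_term g h ca fa t" using Fun.prems(1) by auto
  have "\<forall>t\<in>set ts. \<exists>M p. redle (tsz t * (Zb * U + Suc h)) (inst (dep (fr vs) d) 0 (cr (length ps) ps d t)) M \<and>
        rep M (rsubst \<sigma> t) p \<and> p \<le> tsz t"
    using Fun.IH Fun.prems w(3) by fastforce
  from list_choice[OF this] obtain Ms qs where ch: "length Ms = length ts" "length qs = length ts"
    "\<forall>i<length ts. redle (tsz (ts ! i) * (Zb * U + Suc h)) (inst (dep (fr vs) d) 0 (cr (length ps) ps d (ts ! i))) (Ms ! i) \<and>
        rep (Ms ! i) (rsubst \<sigma> (ts ! i)) (qs ! i) \<and> qs ! i \<le> tsz (ts ! i)"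
    by blast
  let ?V = "Zb * U + Suc h"
  let ?H = "App (App Dv (SEL f)) Dv"
  have 1: "redle (sum_list (map (\<lambda>t. tsz t * ?V) ts)) (apps ?H (map (\<lambda>t. inst (dep (fr vs) d) 0 (cr (length ps) ps d t)) ts)) (apps ?H Ms)"
    by (rule redle_apps_args) (use ch in auto)
  have 0: "redle (Suc h) (apps ?H (map (\<lambda>t. inst (dep (fr vs) d) 0 (cr (length ps) ps d t)) ts))
      (apps (FC f) (map (\<lambda>t. inst (dep (fr vs) d) 0 (cr (length ps) ps d t)) ts))"
    by (rule redle_apps_head[OF Dv_sel[OF w(1)]])
  have 2: "redle (sum_list (map (\<lambda>t. tsz t * ?V) ts)) (apps (FC f) (map (\<lambda>t. inst (dep (fr vs) d) 0 (cr (length ps) ps d t)) ts)) (apps (FC f) Ms)"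
    by (rule redle_apps_args) (use ch in auto)
  have dv: "inst (dep (fr vs) d) 0 (LVar (d + length ps)) = Dv"
    unfolding inst_dep_var using fr_Dv[of vs] len(1) by simp
  have e: "inst (dep (fr vs) d) 0 (cr (length ps) ps d (Fun f ts)) = apps ?H (map (\<lambda>t. inst (dep (fr vs) d) 0 (cr (length ps) ps d t)) ts)"
    using dv w(1) by (simp add: comp_def del: inst.simps(1))
  have r: "rep (apps (FC f) Ms) (rsubst \<sigma> (Fun f ts)) (sum_list qs)"
    using ch w by (auto intro!: rep.rfun)
  have "sum_list qs \<le> sum_list (map tsz ts)"
    by (rule sum_list_le_nth) (use ch in auto)
  then have pq: "sum_list qs \<le> tsz (Fun f ts)" by simp
  have ineq: "Suc h + sum_list (map (\<lambda>t. tsz t * ?V) ts) \<le> tsz (Fun f ts) * ?V"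
  proof -
    have sm: "sum_list (map (\<lambda>t. tsz t * ?V) ts) = sum_list (map tsz ts) * ?V" by (rule sum_list_mult_const)
    show ?thesis unfolding sm tsz.simps mult_Suc by simp
  qed
  have "redle (tsz (Fun f ts) * ?V) (apps ?H (map (\<lambda>t. inst (dep (fr vs) d) 0 (cr (length ps) ps d t)) ts)) (apps (FC f) Ms)"
    by (rule redle_mono[OF redle_trans[OF 0 2] ineq])
  then have "redle (tsz (Fun f ts) * ?V) (inst (dep (fr vs) d) 0 (cr (length ps) ps d (Fun f ts))) (apps (FC f) Ms)"
    unfolding e .
  then show ?case using r pq by blast
qed

end



context sys begin

definition rsz :: "'v rule \<Rightarrow> nat" where
  "rsz \<rho> = sum_list (map tsz (fst (snd \<rho>))) + tsz (snd (snd \<rho>))"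

definition Z :: nat where "Z = length R + sum_list (map rsz R) + (\<Sum>f<h. fa f)"

lemma rule_bounds:
  assumes "(f, ps, r) \<in> set R"
  shows "sum_list (map tsz ps) \<le> Z" "tsz r \<le> Z" "\<forall>p\<in>set ps. tsz p \<le> Z"
proof -
  have "rsz (f, ps, r) \<le> sum_list (map rsz R)"
    using assms by (intro member_le_sum_list) auto
  then have a: "sum_list (map tsz ps) + tsz r \<le> Z" by (simp add: rsz_def Z_def)
  then show "sum_list (map tsz ps) \<le> Z" "tsz r \<le> Z" by auto
  show "\<forall>p\<in>set ps. tsz p \<le> Z"
  proof
    fix p assume "p \<in> set ps"
    then have "tsz p \<le> sum_list (map tsz ps)" by (intro member_le_sum_list) auto
    with a show "tsz p \<le> Z" by simp
  qed
qed

lemma fa_le: "f < h \<Longrightarrow> fa f \<le> Z"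
proof -
  assume "f < h"
  then have "fa f \<le> (\<Sum>f<h. fa f)" by (intro member_le_sum) auto
  then show ?thesis by (simp add: Z_def)
qed

lemma lenR_le: "length R \<le> Z" by (simp add: Z_def)

lemma wfR: "\<rho> \<in> set R \<Longrightarrow> wf_rule g h ca fa \<rho>"
  using trs by (simp add: constructor_trs_def)

lemma orth_unique:
  assumes "(f, ps, r) \<in> set R" "(f, ps', r') \<in> set R" "map (rsubst \<sigma>) ps = map (rsubst \<sigma>') ps'"
  shows "(f, ps', r') = (f, ps, r)"
proof (rule ccontr)
  assume ne: "(f, ps', r') \<noteq> (f, ps, r)"
  obtain i where i: "i < length R" "R ! i = (f, ps, r)" using assms(1) by (auto simp: in_set_conv_nth)
  obtain j where j: "j < length R" "R ! j = (f, ps', r')" using assms(2) by (auto simp: in_set_conv_nth)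
  have "i \<noteq> j" using i j ne by auto
  then have "\<not> (\<exists>\<sigma>1 \<sigma>2. Fun (fst (R ! i)) (map (rsubst \<sigma>1) (fst (snd (R ! i)))) =
                   Fun (fst (R ! j)) (map (rsubst \<sigma>2) (fst (snd (R ! j)))))"
    using orth i j unfolding orthogonal_def by blast
  then show False using i j assms(3) by auto
qed

lemma pm_sigma_list:
  assumes "(f, ps, r) \<in> set R" "list_all2 pmatch ps ws" "\<forall>w\<in>set ws. is_cterm g ca w"
  shows "\<exists>\<sigma>. map (rsubst \<sigma>) ps = ws"
proof -
  have wf: "\<forall>p\<in>set ps. is_pattern g ca p" using wfR[OF assms(1)] by (simp add: wf_rule_def)
  have ds: "distinct (concat (map rvars ps))" using orth assms(1) unfolding orthogonal_def by fastforce
  have l: "length ws = length ps" using assms(2) list_all2_lengthD by metis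
  have "\<forall>k<length ps. \<exists>\<sigma>. rsubst \<sigma> (ps ! k) = ws ! k"
  proof (intro allI impI)
    fix k assume k: "k < length ps"
    have "distinct (rvars (ps ! k))" using ds k by (auto simp: distinct_concat_iff)
    then show "\<exists>\<sigma>. rsubst \<sigma> (ps ! k) = ws ! k"
      using pm_sigma[of "ps ! k" "ws ! k"] wf assms(2,3) k l by (auto simp: list_all2_conv_all_nth)
  qed
  then show ?thesis using merge l ds by blast
qed

lemma tps_args:
  assumes "(f, ps, r) \<in> set R" "length ws = fa f" "\<forall>w\<in>set ws. is_cterm g ca w"
  shows "\<forall>k<length ps. is_pattern g ca (ps ! k) \<and> is_cterm g ca (ws ! k) \<and>
      Acc (fa f) (fr (map (scott g) ws)) (0 + k) [] (ws ! k) \<and> tsz (ps ! k) \<le> Z"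
proof (intro allI impI)
  fix k assume k: "k < length ps"
  have wf: "length ps = fa f" "\<forall>p\<in>set ps. is_pattern g ca p" using wfR[OF assms(1)] by (auto simp: wf_rule_def)
  have "Acc (fa f) (fr (map (scott g) ws)) k [] (ws ! k)"
    unfolding fr_def using k wf(1) assms(2) by (intro Acc_arg) auto
  then show "is_pattern g ca (ps ! k) \<and> is_cterm g ca (ws ! k) \<and>
      Acc (fa f) (fr (map (scott g) ws)) (0 + k) [] (ws ! k) \<and> tsz (ps ! k) \<le> Z"
    using wf k assms rule_bounds(3)[OF assms(1)] by auto
qed

lemma try_ok:
  assumes "\<forall>\<rho>\<in>set rs. \<rho> \<in> set R \<and> fst \<rho> = f" "length ws = fa f" "\<forall>w\<in>set ws. is_cterm g ca w"
  shows "(\<exists>\<rho>\<in>set rs. list_all2 pmatch (fst (snd \<rho>)) ws) \<Longrightarrow>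
    \<exists>\<rho>\<in>set rs. list_all2 pmatch (fst (snd \<rho>)) ws \<and>
      (\<exists>d'. redle (length rs * (Z * (Suc Z * U))) (inst (dep (fr (map (scott g) ws)) d) 0 (tryr (fa f) d rs))
          (inst (dep (fr (map (scott g) ws)) d') 0 (cr (fa f) (fst (snd \<rho>)) d' (snd (snd \<rho>)))))"
  using assms(1)
proof (induction rs arbitrary: d)
  case Nil then show ?case by simp
next
  case (Cons \<rho> rs)
  obtain ps r where \<rho>: "\<rho> = (f, ps, r)" "\<rho> \<in> set R" using Cons.prems(2) by (cases \<rho>) auto
  let ?vs = "map (scott g) ws"
  have cf: "cenv (fr ?vs)" using assms(3) closed_scott value_scott by (intro cenv_fr) auto
  have ta: "\<forall>k<length ps. is_pattern g ca (ps ! k) \<and> is_cterm g ca (ws ! k) \<and>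
      Acc (fa f) (fr ?vs) (0 + k) [] (ws ! k) \<and> tsz (ps ! k) \<le> Z"
    using tps_args[OF _ assms(2,3)] \<rho> by auto
  have lp: "length ws = length ps" using wfR[OF \<rho>(2)] \<rho>(1) assms(2) by (simp add: wf_rule_def)
  have sz: "sum_list (map tsz ps) \<le> Z" using rule_bounds(1) \<rho> by auto
  have tr: "tryr (fa f) d (\<rho> # rs) = tps (fa f) 0 ps d (\<lambda>d'. cr (fa f) ps d' r) (\<lambda>d'. tryr (fa f) d' rs)"
    using \<rho>(1) by simp
  show ?case
  proof (cases "list_all2 pmatch ps ws")
    case True
    obtain d' where A: "redle (sum_list (map tsz ps) * (Suc Z * U)) (inst (dep (fr ?vs) d) 0 (tps (fa f) 0 ps d (\<lambda>d'. cr (fa f) ps d' r) (\<lambda>d'. tryr (fa f) d' rs)))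
        (inst (dep (fr ?vs) d') 0 (cr (fa f) ps d' r))"
      using tps_T[OF cf lp ta True] by blast
    have B: "sum_list (map tsz ps) * (Suc Z * U) \<le> length (\<rho> # rs) * (Z * (Suc Z * U))"
    proof -
      have "sum_list (map tsz ps) * (Suc Z * U) \<le> Z * (Suc Z * U)" using sz by simp
      also have "\<dots> \<le> length (\<rho> # rs) * (Z * (Suc Z * U))" by simp
      finally show ?thesis .
    qed
    have "redle (length (\<rho> # rs) * (Z * (Suc Z * U))) (inst (dep (fr ?vs) d) 0 (tryr (fa f) d (\<rho> # rs)))
        (inst (dep (fr ?vs) d') 0 (cr (fa f) ps d' r))"
      unfolding tr by (rule redle_mono[OF A B])
    then show ?thesis using True \<rho>(1) by (intro bexI[of _ \<rho>]) auto
  next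
    case False
    obtain d1 where 1: "redle (sum_list (map tsz ps) * (Suc Z * U)) (inst (dep (fr ?vs) d) 0 (tps (fa f) 0 ps d (\<lambda>d'. cr (fa f) ps d' r) (\<lambda>d'. tryr (fa f) d' rs)))
        (inst (dep (fr ?vs) d1) 0 (tryr (fa f) d1 rs))"
      using tps_F[OF cf lp ta False] by blast
    have ex: "\<exists>\<rho>\<in>set rs. list_all2 pmatch (fst (snd \<rho>)) ws" using Cons.prems(1) False \<rho>(1) by auto
    have pr: "\<forall>\<rho>\<in>set rs. \<rho> \<in> set R \<and> fst \<rho> = f" using Cons.prems(2) by simp
    have "\<exists>\<rho>'\<in>set rs. list_all2 pmatch (fst (snd \<rho>')) ws \<and>
      (\<exists>d'. redle (length rs * (Z * (Suc Z * U))) (inst (dep (fr ?vs) d1) 0 (tryr (fa f) d1 rs))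
          (inst (dep (fr ?vs) d') 0 (cr (fa f) (fst (snd \<rho>')) d' (snd (snd \<rho>')))))"
      by (rule Cons.IH[OF ex pr])
    then obtain \<rho>' d' where r: "\<rho>' \<in> set rs" "list_all2 pmatch (fst (snd \<rho>')) ws"
      "redle (length rs * (Z * (Suc Z * U))) (inst (dep (fr ?vs) d1) 0 (tryr (fa f) d1 rs))
          (inst (dep (fr ?vs) d') 0 (cr (fa f) (fst (snd \<rho>')) d' (snd (snd \<rho>'))))"
      by blast
    have le: "sum_list (map tsz ps) * (Suc Z * U) + length rs * (Z * (Suc Z * U)) \<le> length (\<rho> # rs) * (Z * (Suc Z * U))"
    proof -
      have "sum_list (map tsz ps) * (Suc Z * U) \<le> Z * (Suc Z * U)" using sz by simp
      then show ?thesis by simp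
    qed
    have "redle (length (\<rho> # rs) * (Z * (Suc Z * U))) (inst (dep (fr ?vs) d) 0 (tryr (fa f) d (\<rho> # rs)))
          (inst (dep (fr ?vs) d') 0 (cr (fa f) (fst (snd \<rho>')) d' (snd (snd \<rho>'))))"
      unfolding tr by (rule redle_mono[OF redle_trans[OF 1 r(3)] le])
    then show ?thesis using r(1,2) by auto
  qed
qed

lemma try_fail:
  assumes "\<forall>\<rho>\<in>set rs. \<rho> \<in> set R \<and> fst \<rho> = f" "length ws = fa f" "\<forall>w\<in>set ws. is_cterm g ca w"
  shows "(\<forall>\<rho>\<in>set rs. \<not> list_all2 pmatch (fst (snd \<rho>)) ws) \<Longrightarrow>
    \<exists>b. redle b (inst (dep (fr (map (scott g) ws)) d) 0 (tryr (fa f) d rs)) (bot_term g)"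
  using assms(1)
proof (induction rs arbitrary: d)
  case Nil then show ?case by (auto intro: redle_refl)
next
  case (Cons \<rho> rs)
  obtain ps r where \<rho>: "\<rho> = (f, ps, r)" "\<rho> \<in> set R" using Cons.prems(2) by (cases \<rho>) auto
  let ?vs = "map (scott g) ws"
  have cf: "cenv (fr ?vs)" using assms(3) closed_scott value_scott by (intro cenv_fr) auto
  have ta: "\<forall>k<length ps. is_pattern g ca (ps ! k) \<and> is_cterm g ca (ws ! k) \<and>
      Acc (fa f) (fr ?vs) (0 + k) [] (ws ! k) \<and> tsz (ps ! k) \<le> Z"
    using tps_args[OF _ assms(2,3)] \<rho> by auto
  have lp: "length ws = length ps" using wfR[OF \<rho>(2)] \<rho>(1) assms(2) by (simp add: wf_rule_def)
  have tr: "tryr (fa f) d (\<rho> # rs) = tps (fa f) 0 ps d (\<lambda>d'. cr (fa f) ps d' r) (\<lambda>d'. tryr (fa f) d' rs)"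
    using \<rho>(1) by simp
  have False': "\<not> list_all2 pmatch ps ws" using Cons.prems(1) \<rho>(1) by auto
  obtain d1 b1 where 1: "redle b1 (inst (dep (fr ?vs) d) 0 (tps (fa f) 0 ps d (\<lambda>d'. cr (fa f) ps d' r) (\<lambda>d'. tryr (fa f) d' rs)))
      (inst (dep (fr ?vs) d1) 0 (tryr (fa f) d1 rs))"
    using tps_F[OF cf lp ta False'] by blast
  have pr: "\<forall>\<rho>\<in>set rs. \<rho> \<in> set R \<and> fst \<rho> = f" using Cons.prems(2) by simp
  have nm: "\<forall>\<rho>\<in>set rs. \<not> list_all2 pmatch (fst (snd \<rho>)) ws" using Cons.prems(1) by simp
  obtain b where "redle b (inst (dep (fr ?vs) d1) 0 (tryr (fa f) d1 rs)) (bot_term g)"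
    using Cons.IH[OF nm pr] by blast
  from redle_trans[OF 1 this] show ?case unfolding tr by blast
qed

end



context sys begin

definition K0 :: nat where "K0 = Z + Z * U + Z * (Z * (Suc Z * U)) + Z * (Z * U + Suc h)"

lemma exec:
  assumes r: "(f, ps, r) \<in> set R" and ws: "\<forall>w\<in>set ws. is_cterm g ca w" and m: "map (rsubst \<sigma>) ps = ws"
  shows "\<exists>j M' p'. j \<le> K0 \<and> red (Suc j) (apps (FC f) (map (scott g) ws)) M' \<and> rep M' (rsubst \<sigma> r) p' \<and> p' \<le> Z"
proof -
  have wf: "f < h" "length ps = fa f" "\<forall>p\<in>set ps. is_pattern g ca p" "wf_term g h ca fa r"
     "set (rvars r) \<subseteq> (\<Union>p\<in>set ps. set (rvars p))"
    using wfR[OF r] by (auto simp: wf_rule_def)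
  have lw: "length ws = fa f" using m wf(2) by auto
  let ?vs = "map (scott g) ws"
  have cl: "\<forall>v\<in>set ?vs. closedb 0 v \<and> is_value v" using ws closed_scott value_scott by auto
  have ce: "cenv (econs Dv rhoI)" using Dv_cl by (intro cenv_econs cenv_rhoI) auto
  have "beta_v (App (inst rhoI 0 (Abs (abss (fa f) (body f)))) Dv) (inst (econs Dv rhoI) 0 (abss (fa f) (body f)))"
    by (rule beta_inst[OF cenv_rhoI Dv_cl])
  then have s1: "red 1 (apps (FC f) ?vs) (apps (inst (econs Dv rhoI) 0 (abss (fa f) (body f))) ?vs)"
    unfolding FC_def CodeV_def by (intro red_apps_head red1)
  have s2: "red (fa f) (apps (inst (econs Dv rhoI) 0 (abss (fa f) (body f))) ?vs) (inst (fr ?vs) 0 (body f))"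
    using apps_abss[OF ce cl, of "body f"] lw by (simp add: fr_def)
  have sv: "\<forall>i\<in>set [0..<fa f]. i < fa f \<and> sval (?vs ! i)"
    using ws lw by (auto simp: sval_def)
  have lv: "length ?vs = fa f" using lw by simp
  have s3: "redle (fa f * U) (inst (fr ?vs) 0 (body f)) (inst (dep (fr ?vs) (fa f)) 0 (tryr (fa f) (fa f) (rules f)))"
    using chk_ok[OF ce lv cl sv, of 0 "\<lambda>d. tryr (fa f) d (rules f)"] unfolding body_def fr_def by simp
  have rs: "\<forall>\<rho>\<in>set (rules f). \<rho> \<in> set R \<and> fst \<rho> = f" by (simp add: rules_def)
  have pm: "list_all2 pmatch ps ws"
    using m wf(3) pm_rsubst by (auto simp: list_all2_conv_all_nth)
  have ex: "\<exists>\<rho>\<in>set (rules f). list_all2 pmatch (fst (snd \<rho>)) ws"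
    using r pm by (intro bexI[of _ "(f, ps, r)"]) (auto simp: rules_def)
  obtain \<rho>'' d' where t: "\<rho>'' \<in> set (rules f)" "list_all2 pmatch (fst (snd \<rho>'')) ws"
    "redle (length (rules f) * (Z * (Suc Z * U))) (inst (dep (fr ?vs) (fa f)) 0 (tryr (fa f) (fa f) (rules f)))
          (inst (dep (fr ?vs) d') 0 (cr (fa f) (fst (snd \<rho>'')) d' (snd (snd \<rho>''))))"
    using try_ok[OF rs lw ws ex] by blast
  have rr: "\<rho>'' \<in> set R" "fst \<rho>'' = f" using rs t(1) by auto
  obtain ps'' r'' where \<rho>'': "\<rho>'' = (f, ps'', r'')" "(f, ps'', r'') \<in> set R"
    using rr by (metis prod.collapse)
  obtain \<sigma>'' where "map (rsubst \<sigma>'') ps'' = ws" using pm_sigma_list[OF \<rho>''(2)] t(2) \<rho>''(1) ws by auto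
  then have "map (rsubst \<sigma>) ps = map (rsubst \<sigma>'') ps''" using m by simp
  then have eq: "(f, ps'', r'') = (f, ps, r)" by (rule orth_unique[OF r \<rho>''(2)])
  have args: "\<forall>k<length ps. is_pattern g ca (ps ! k) \<and> rsubst \<sigma> (ps ! k) = ws ! k \<and> is_cterm g ca (ws ! k) \<and>
       ?vs ! k = scott g (ws ! k) \<and> tsz (ps ! k) \<le> Z"
    using wf m ws rule_bounds(3)[OF r] lw by auto
  obtain M' p' where rh: "redle (tsz r * (Z * U + Suc h)) (inst (dep (fr ?vs) d') 0 (cr (length ps) ps d' r)) M'"
      "rep M' (rsubst \<sigma> r) p'" "p' \<le> tsz r"
  proof -
    have l1: "length ?vs = length ps" "length ws = length ps" using lw wf(2) by auto
    show ?thesis using rhs_eval[OF l1 args wf(4,5), where d=d'] that by blast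
  qed
  have t3: "redle (length (rules f) * (Z * (Suc Z * U))) (inst (dep (fr ?vs) (fa f)) 0 (tryr (fa f) (fa f) (rules f)))
          (inst (dep (fr ?vs) d') 0 (cr (length ps) ps d' r))"
    using t(3) \<rho>''(1) eq wf(2) by simp
  have all: "redle (fa f * U + length (rules f) * (Z * (Suc Z * U)) + tsz r * (Z * U + Suc h))
        (inst (fr ?vs) 0 (body f)) M'"
    using redle_trans[OF redle_trans[OF s3 t3] rh(1)] by simp
  then obtain j' where j': "j' \<le> fa f * U + length (rules f) * (Z * (Suc Z * U)) + tsz r * (Z * U + Suc h)"
      "red j' (inst (fr ?vs) 0 (body f)) M'"
    unfolding redle_def by blast
  have "red (1 + (fa f + j')) (apps (FC f) ?vs) M'" using red_add[OF s1 red_add[OF s2 j'(2)]] .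
  moreover have "fa f + j' \<le> K0"
  proof -
    have a: "fa f \<le> Z" using fa_le[OF wf(1)] .
    have b: "length (rules f) \<le> Z" using lenR_le unfolding rules_def by (meson le_trans length_filter_le)
    have c: "tsz r \<le> Z" using rule_bounds(2)[OF r] .
    have "fa f * U \<le> Z * U" using a by simp
    moreover have "length (rules f) * (Z * (Suc Z * U)) \<le> Z * (Z * (Suc Z * U))" using b by (rule mult_le_mono1)
    moreover have "tsz r * (Z * U + Suc h) \<le> Z * (Z * U + Suc h)" using c by (rule mult_le_mono1)
    ultimately show ?thesis using a j'(1) unfolding K0_def by linarith
  qed
  moreover have "p' \<le> Z" using rh(3) rule_bounds(2)[OF r] by simp
  ultimately show ?thesis using rh(2) by (intro exI[of _ "fa f + j'"]) auto
qed

end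



lemma red_apps_arg: "i < length Ms \<Longrightarrow> red j (Ms ! i) N \<Longrightarrow> red j (apps H Ms) (apps H (Ms[i := N]))"
proof (induction Ms arbitrary: H i)
  case Nil then show ?case by simp
next
  case (Cons M Ms)
  show ?case
  proof (cases i)
    case 0
    then show ?thesis using Cons.prems by (simp add: red_apps_head red_appR)
  next
    case (Suc k)
    then show ?thesis using Cons by simp
  qed
qed

lemma sum_list_upd: "i < length xs \<Longrightarrow> sum_list (xs[i := y]) + xs ! i = sum_list xs + (y :: nat)"
proof (induction xs arbitrary: i)
  case Nil then show ?case by simp
next
  case (Cons x xs)
  then show ?case by (cases i) auto
qed

context sys begin

definition C :: nat where "C = Suc sca * U"
definition K :: nat where "K = Suc K0 + C * Z"

inductive_cases rep_FunE: "rep M (Fun f ts) p"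
inductive_cases rep_ConE: "rep M (Con c ts) p"

lemma cterm_nostep: "cbv_step g ca R t t' \<Longrightarrow> \<not> is_cterm g ca t"
  by (induction rule: cbv_step.induct) auto

lemma cterm_rsubst: "is_pattern g ca p \<Longrightarrow> (\<forall>x. is_cterm g ca (\<sigma> x)) \<Longrightarrow> is_cterm g ca (rsubst \<sigma> (p :: 'v rterm))"
  by (induction p) auto

lemma lemN: "rep M t p \<Longrightarrow> is_cterm g ca t \<Longrightarrow> redle (C * p) M (scott g t)"
proof (induction rule: rep.induct)
  case (rsc t)
  then show ?case by (simp add: redle_refl)
next
  case (rcon c ts Ms ps)
  have ct: "\<forall>t\<in>set ts. is_cterm g ca t" using rcon.prems by simp
  have 1: "redle (sum_list (map (\<lambda>p. C * p) ps)) (apps (CC c) Ms) (apps (CC c) (map (scott g) ts))"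
    by (rule redle_apps_args) (use rcon ct in auto)
  have 2: "redle C (apps (CC c) (map (scott g) ts)) (scott g (Con c ts))"
    using CC_eval[OF rcon(1) ct rcon(2)] unfolding C_def .
  have "sum_list (map (\<lambda>p. C * p) ps) = C * sum_list ps" by (induction ps) (auto simp: algebra_simps)
  with redle_trans[OF 1 2] show ?case by (simp add: algebra_simps)
next
  case (rfun f ts Ms ps)
  then show ?case by simp
qed

lemma fc_enter:
  assumes "\<forall>v\<in>set vs. closedb 0 v \<and> is_value v" "length vs = fa f"
  shows "red (Suc (fa f)) (apps (FC f) vs) (inst (fr vs) 0 (body f))"
proof -
  have ce: "cenv (econs Dv rhoI)" using Dv_cl by (intro cenv_econs cenv_rhoI) auto
  have "beta_v (App (inst rhoI 0 (Abs (abss (fa f) (body f)))) Dv) (inst (econs Dv rhoI) 0 (abss (fa f) (body f)))"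
    by (rule beta_inst[OF cenv_rhoI Dv_cl])
  then have s1: "red 1 (apps (FC f) vs) (apps (inst (econs Dv rhoI) 0 (abss (fa f) (body f))) vs)"
    unfolding FC_def CodeV_def by (intro red_apps_head red1)
  have s2: "red (fa f) (apps (inst (econs Dv rhoI) 0 (abss (fa f) (body f))) vs) (inst (fr vs) 0 (body f))"
    using apps_abss[OF ce assms(1), of "body f"] assms(2) by (simp add: fr_def)
  from red_add[OF s1 s2] show ?thesis by simp
qed

lemma rnormal_sub: "rnormal g ca R (Con c ts) \<Longrightarrow> i < length ts \<Longrightarrow> rnormal g ca R (ts ! i)"
  "rnormal g ca R (Fun f ts) \<Longrightarrow> i < length ts \<Longrightarrow> rnormal g ca R (ts ! i)"
  unfolding rnormal_def using cbv_step.ctxt_con cbv_step.ctxt_fun by blast+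

lemma lemB: "rep M t p \<Longrightarrow> rnormal g ca R t \<Longrightarrow> \<exists>b. redle b M (if is_cterm g ca t then scott g t else bot_term g)"
proof (induction rule: rep.induct)
  case (rsc t)
  then show ?case by (auto intro: redle_refl)
next
  case (rcon c ts Ms ps)
  let ?val = "\<lambda>t. if is_cterm g ca t then scott g t else bot_term g"
  have "\<forall>i<length ts. \<exists>b. redle b (Ms ! i) (?val (ts ! i))"
    using rcon rnormal_sub(1) by blast
  then obtain B where B: "\<forall>i<length ts. redle (B i) (Ms ! i) (?val (ts ! i))" by metis
  have 1: "redle (sum_list (map B [0..<length ts])) (apps (CC c) Ms) (apps (CC c) (map ?val ts))"
    by (rule redle_apps_args) (use rcon B in auto)
  show ?case
  proof (cases "\<forall>t\<in>set ts. is_cterm g ca t")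
    case True
    then have "map ?val ts = map (scott g) ts" by auto
    with 1 have one: "redle (sum_list (map B [0..<length ts])) (apps (CC c) Ms) (apps (CC c) (map (scott g) ts))" by simp
    from redle_trans[OF one CC_eval[OF rcon(1) True rcon(2)]] show ?thesis using True rcon(1,2) by auto
  next
    case False
    have bv: "\<forall>v\<in>set (map ?val ts). bval v" by (auto simp: bval_def sval_def)
    have ex: "\<exists>v\<in>set (map ?val ts). v = bot_term g" using False by auto
    obtain b where "redle b (apps (CC c) (map ?val ts)) (bot_term g)"
      using CC_bot[OF _ bv ex] rcon(2) by auto
    from redle_trans[OF 1 this] show ?thesis using False by auto
  qed
next
  case (rfun f ts Ms ps)
  let ?val = "\<lambda>t. if is_cterm g ca t then scott g t else bot_term g"
  have "\<forall>i<length ts. \<exists>b. redle b (Ms ! i) (?val (ts ! i))"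
    using rfun rnormal_sub(2) by blast
  then obtain B where B: "\<forall>i<length ts. redle (B i) (Ms ! i) (?val (ts ! i))" by metis
  have 1: "redle (sum_list (map B [0..<length ts])) (apps (FC f) Ms) (apps (FC f) (map ?val ts))"
    by (rule redle_apps_args) (use rfun B in auto)
  let ?vs = "map ?val ts"
  have bv: "\<forall>v\<in>set ?vs. bval v" by (auto simp: bval_def sval_def)
  have cl: "\<forall>v\<in>set ?vs. closedb 0 v \<and> is_value v" using bv bval_cl by blast
  have lv: "length ?vs = fa f" using rfun(2) by simp
  have 2: "redle (Suc (fa f)) (apps (FC f) ?vs) (inst (fr ?vs) 0 (body f))"
    using fc_enter[OF cl lv] by (rule redle_red) simp
  have ce: "cenv (econs Dv rhoI)" using Dv_cl by (intro cenv_econs cenv_rhoI) auto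
  have "\<exists>b. redle b (inst (fr ?vs) 0 (body f)) (bot_term g)"
  proof (cases "\<forall>t\<in>set ts. is_cterm g ca t")
    case False
    have bvi: "\<forall>i\<in>set [0..<fa f]. i < fa f \<and> bval (?vs ! i)" using lv by (auto simp: bval_def sval_def)
    obtain i where i: "i < length ts" "\<not> is_cterm g ca (ts ! i)" using False by (auto simp: in_set_conv_nth)
    have ex: "\<exists>i\<in>set [0..<fa f]. ?vs ! i = bot_term g"
      using i rfun(2) by (intro bexI[of _ i]) auto
    show ?thesis using chk_bot[OF ce lv cl bvi ex, of 0 "\<lambda>d. tryr (fa f) d (rules f)"]
      unfolding body_def fr_def by simp
  next
    case True
    have vs: "?vs = map (scott g) ts" using True by auto
    have sv: "\<forall>i\<in>set [0..<fa f]. i < fa f \<and> sval (?vs ! i)"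
      using True lv by (auto simp: sval_def)
    have s3: "redle (fa f * U) (inst (fr ?vs) 0 (body f)) (inst (dep (fr ?vs) (fa f)) 0 (tryr (fa f) (fa f) (rules f)))"
      using chk_ok[OF ce lv cl sv, of 0 "\<lambda>d. tryr (fa f) d (rules f)"] unfolding body_def fr_def by simp
    have rs: "\<forall>\<rho>\<in>set (rules f). \<rho> \<in> set R \<and> fst \<rho> = f" by (simp add: rules_def)
    have nm: "\<forall>\<rho>\<in>set (rules f). \<not> list_all2 pmatch (fst (snd \<rho>)) ts"
    proof
      fix \<rho> assume \<rho>: "\<rho> \<in> set (rules f)"
      show "\<not> list_all2 pmatch (fst (snd \<rho>)) ts"
      proof
        assume pm: "list_all2 pmatch (fst (snd \<rho>)) ts"
        obtain ps r where \<rho>e: "\<rho> = (f, ps, r)" "(f, ps, r) \<in> set R"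
          using rs \<rho> by (metis prod.collapse)
        obtain \<sigma> where s: "map (rsubst \<sigma>) ps = ts" using pm_sigma_list[OF \<rho>e(2)] pm \<rho>e(1) True by auto
        obtain w0 :: "'v rterm" where w0: "is_cterm g ca w0" using exct by blast
        define \<sigma>' where "\<sigma>' x = (if x \<in> (\<Union>p\<in>set ps. set (rvars p)) then \<sigma> x else w0)" for x
        have s': "map (rsubst \<sigma>') ps = ts"
        proof -
          have "\<forall>p\<in>set ps. rsubst \<sigma>' p = rsubst \<sigma> p" by (auto intro!: rsubst_cong simp: \<sigma>'_def)
          then have "map (rsubst \<sigma>') ps = map (rsubst \<sigma>) ps" by (intro map_cong) auto
          then show ?thesis using s by simp
        qed
        have cs: "\<forall>x. is_cterm g ca (\<sigma>' x)"
        proof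
          fix x
          show "is_cterm g ca (\<sigma>' x)"
          proof (cases "x \<in> (\<Union>p\<in>set ps. set (rvars p))")
            case True
            then obtain p where p: "p \<in> set ps" "x \<in> set (rvars p)" by auto
            have "rsubst \<sigma> p \<in> set ts" using s p(1) by auto
            then have "is_cterm g ca (rsubst \<sigma> p)" using \<open>\<forall>t\<in>set ts. is_cterm g ca t\<close> by auto
            then have "is_cterm g ca (\<sigma> x)" using sub_cterm[OF refl _ p(2)] by blast
            then show ?thesis using True by (simp add: \<sigma>'_def)
          next
            case False then show ?thesis using w0 by (simp add: \<sigma>'_def)
          qed
        qed
        have "cbv_step g ca R (Fun f (map (rsubst \<sigma>') ps)) (rsubst \<sigma>' r)"
          by (rule cbv_step.root[OF \<rho>e(2) cs])
        then show False using rfun.prems s' unfolding rnormal_def by auto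
      qed
    qed
    have tsl: "\<forall>w\<in>set ts. is_cterm g ca w" using True .
    have tf: "\<exists>b. redle b (inst (dep (fr (map (scott g) ts)) (fa f)) 0 (tryr (fa f) (fa f) (rules f))) (bot_term g)"
      by (rule try_fail[OF rs rfun(2) tsl nm])
    have "\<exists>b. redle b (inst (dep (fr ?vs) (fa f)) 0 (tryr (fa f) (fa f) (rules f))) (bot_term g)"
      unfolding vs by (rule tf)
    then obtain b where "redle b (inst (dep (fr ?vs) (fa f)) 0 (tryr (fa f) (fa f) (rules f))) (bot_term g)" by blast
    from redle_trans[OF s3 this] show ?thesis by blast
  qed
  then obtain b where "redle b (inst (fr ?vs) 0 (body f)) (bot_term g)" by blast
  from redle_trans[OF redle_trans[OF 1 2] this] show ?case by auto
qed

end



lemma inf_chain: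
  assumes "P x0" "\<And>x. P x \<Longrightarrow> \<exists>y j. 0 < j \<and> red j x y \<and> P y"
  shows "\<exists>s. s 0 = x0 \<and> (\<forall>i. beta_v (s i) (s (Suc i)))"
proof -
  define Q where "Q x = (\<exists>y j. red j x y \<and> P y)" for x
  have step: "\<exists>z. beta_v x z \<and> Q z" if q: "Q x" for x
  proof -
    obtain y j where y: "red j x y" "P y" using q unfolding Q_def by blast
    obtain y' j' where y': "0 < j'" "red j' y y'" "P y'" using assms(2)[OF y(2)] by blast
    have r: "red (j + j') x y'" using red_add[OF y(1) y'(2)] .
    obtain n where n: "j + j' = Suc n" using y'(1) by (metis add_gr_0 gr0_conv_Suc)
    obtain z where "beta_v x z" "red n z y'" using relpowp_Suc_D2[where P=beta_v and n=n and x=x and z=y'] r n by auto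
    then show ?thesis using y'(3) unfolding Q_def by blast
  qed
  define nxt where "nxt x = (SOME z. beta_v x z \<and> Q z)" for x
  define s where "s i = (nxt ^^ i) x0" for i
  have Qs: "Q (s i)" for i
  proof (induction i)
    case 0
    have "red 0 x0 x0 \<and> P x0" using assms(1) by simp
    then show ?case unfolding s_def Q_def by (metis funpow_0)
  next
    case (Suc i)
    have "beta_v (s i) (nxt (s i)) \<and> Q (nxt (s i))"
      unfolding nxt_def by (rule someI_ex[OF step[OF Suc]])
    then show ?case by (simp add: s_def)
  qed
  have "beta_v (s i) (s (Suc i))" for i
  proof -
    have "beta_v (s i) (nxt (s i)) \<and> Q (nxt (s i))"
      unfolding nxt_def by (rule someI_ex[OF step[OF Qs]])
    then show ?thesis by (simp add: s_def)
  qed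
  moreover have "s 0 = x0" by (simp add: s_def)
  ultimately show ?thesis by blast
qed

context sys begin

lemma lemS: "cbv_step g ca R t t' \<Longrightarrow> rep M t p \<Longrightarrow>
  \<exists>j M' p'. 1 \<le> j \<and> j + C * p' \<le> K + C * p \<and> red j M M' \<and> rep M' t' p'"
proof (induction arbitrary: M p rule: cbv_step.induct)
  case (root f ps r \<sigma>)
  have wf: "\<forall>p\<in>set ps. is_pattern g ca p" using wfR[OF root(1)] by (simp add: wf_rule_def)
  let ?ws = "map (rsubst \<sigma>) ps"
  have cw: "\<forall>w\<in>set ?ws. is_cterm g ca w" using wf root(2) cterm_rsubst by auto
  show ?case
  proof -
    obtain Ms qs where rfun: "M = apps (FC f) Ms" "p = sum_list qs" "f < h" "length ?ws = fa f"
      "length Ms = length ?ws" "length qs = length ?ws" "\<forall>i<length ?ws. rep (Ms ! i) (?ws ! i) (qs ! i)"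
      using root.prems by (cases rule: rep.cases) auto
    have 1: "redle (sum_list (map (\<lambda>q. C * q) qs)) (apps (FC f) Ms) (apps (FC f) (map (scott g) ?ws))"
    proof (rule redle_apps_args)
      show "\<forall>i<length Ms. redle (map (\<lambda>q. C * q) qs ! i) (Ms ! i) (map (scott g) ?ws ! i)"
        using rfun cw lemN by auto
    qed (use rfun in auto)
    have sq: "sum_list (map (\<lambda>q. C * q) qs) = C * sum_list qs" by (induction qs) (auto simp: algebra_simps)
    obtain j1 where j1: "j1 \<le> C * p" "red j1 (apps (FC f) Ms) (apps (FC f) (map (scott g) ?ws))"
      using 1 rfun(2) unfolding sq redle_def by auto
    obtain j M' p' where e: "j \<le> K0" "red (Suc j) (apps (FC f) (map (scott g) ?ws)) M'" "rep M' (rsubst \<sigma> r) p'" "p' \<le> Z"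
      using exec[OF root(1) cw refl] by blast
    have "j1 + Suc j + C * p' \<le> K + C * p"
    proof -
      have "C * p' \<le> C * Z" using e(4) by simp
      then show ?thesis using j1(1) e(1) unfolding K_def by linarith
    qed
    moreover have "red (j1 + Suc j) M M'" using red_add[OF j1(2) e(2)] rfun(1) by simp
    ultimately show ?thesis using e(3) by (intro exI[of _ "j1 + Suc j"] exI[of _ M'] exI[of _ p']) auto
  qed
next
  case (ctxt_con i ts t' c)
  show ?case
  proof (cases "is_cterm g ca (Con c ts)")
    case True
    then have "is_cterm g ca (ts ! i)" using ctxt_con(1) by auto
    then show ?thesis using cterm_nostep[OF ctxt_con(2)] by simp
  next
    case False
    obtain Ms qs where rcon: "M = apps (CC c) Ms" "p = Suc (sum_list qs)" "c < g" "length ts = ca c"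
      "length Ms = length ts" "length qs = length ts" "\<forall>i<length ts. rep (Ms ! i) (ts ! i) (qs ! i)"
      using ctxt_con.prems False by (cases rule: rep.cases) auto
    have ri: "rep (Ms ! i) (ts ! i) (qs ! i)" using rcon ctxt_con(1) by auto
    obtain j Mi pi where ih: "1 \<le> j" "j + C * pi \<le> K + C * (qs ! i)" "red j (Ms ! i) Mi" "rep Mi t' pi"
      using ctxt_con.IH[OF ri] by blast
    have r: "red j (apps (CC c) Ms) (apps (CC c) (Ms[i := Mi]))"
      using red_apps_arg[OF _ ih(3)] rcon ctxt_con(1) by simp
    have rp: "rep (apps (CC c) (Ms[i := Mi])) (Con c (ts[i := t'])) (Suc (sum_list (qs[i := pi])))"
    proof (rule rep.rcon)
      show "\<forall>k<length (ts[i := t']). rep (Ms[i := Mi] ! k) (ts[i := t'] ! k) (qs[i := pi] ! k)"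
        using rcon ih(4) ctxt_con(1) by (auto simp: nth_list_update)
    qed (use rcon in auto)
    have su: "sum_list (qs[i := pi]) + qs ! i = sum_list qs + pi" using sum_list_upd rcon ctxt_con(1) by simp
    have "j + C * Suc (sum_list (qs[i := pi])) \<le> K + C * p"
    proof -
      have "C * sum_list (qs[i := pi]) + C * (qs ! i) = C * sum_list qs + C * pi"
        using arg_cong[OF su, of "\<lambda>x. C * x"] by (simp add: algebra_simps)
      then show ?thesis using ih(2) rcon(2) by (simp add: algebra_simps)
    qed
    then show ?thesis using ih(1) r rp rcon(1) by blast
  qed
next
  case (ctxt_fun i ts t' f)
  show ?case
  proof -
    obtain Ms qs where rfun: "M = apps (FC f) Ms" "p = sum_list qs" "f < h" "length ts = fa f"
      "length Ms = length ts" "length qs = length ts" "\<forall>i<length ts. rep (Ms ! i) (ts ! i) (qs ! i)"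
      using ctxt_fun.prems by (cases rule: rep.cases) auto
    have ri: "rep (Ms ! i) (ts ! i) (qs ! i)" using rfun ctxt_fun(1) by auto
    obtain j Mi pi where ih: "1 \<le> j" "j + C * pi \<le> K + C * (qs ! i)" "red j (Ms ! i) Mi" "rep Mi t' pi"
      using ctxt_fun.IH[OF ri] by blast
    have r: "red j (apps (FC f) Ms) (apps (FC f) (Ms[i := Mi]))"
      using red_apps_arg[OF _ ih(3)] rfun ctxt_fun(1) by simp
    have rp: "rep (apps (FC f) (Ms[i := Mi])) (Fun f (ts[i := t'])) (sum_list (qs[i := pi]))"
    proof (rule rep.rfun)
      show "\<forall>k<length (ts[i := t']). rep (Ms[i := Mi] ! k) (ts[i := t'] ! k) (qs[i := pi] ! k)"
        using rfun ih(4) ctxt_fun(1) by (auto simp: nth_list_update)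
    qed (use rfun in auto)
    have su: "sum_list (qs[i := pi]) + qs ! i = sum_list qs + pi" using sum_list_upd rfun ctxt_fun(1) by simp
    have "j + C * sum_list (qs[i := pi]) \<le> K + C * p"
    proof -
      have "C * sum_list (qs[i := pi]) + C * (qs ! i) = C * sum_list qs + C * pi"
        using arg_cong[OF su, of "\<lambda>x. C * x"] by (simp add: algebra_simps)
      then show ?thesis using ih(2) rfun(2) by (simp add: algebra_simps)
    qed
    then show ?thesis using ih(1) r rp rfun(1) by blast
  qed
qed

lemma iter: "(cbv_step g ca R ^^ n) t v \<Longrightarrow> rep M t p \<Longrightarrow>
  \<exists>j M' p'. j + C * p' \<le> K * n + C * p \<and> red j M M' \<and> rep M' v p'"
proof (induction n arbitrary: v)
  case 0
  then show ?case by (intro exI[of _ 0] exI[of _ M] exI[of _ p]) auto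
next
  case (Suc n)
  from Suc.prems(1) obtain y where y: "(cbv_step g ca R ^^ n) t y" "cbv_step g ca R y v"
    by (rule relpowp_Suc_E)
  obtain j M1 p1 where a: "j + C * p1 \<le> K * n + C * p" "red j M M1" "rep M1 y p1"
    using Suc.IH[OF y(1) Suc.prems(2)] by blast
  obtain j2 M2 p2 where b: "1 \<le> j2" "j2 + C * p2 \<le> K + C * p1" "red j2 M1 M2" "rep M2 v p2"
    using lemS[OF y(2) a(3)] by blast
  have "j + j2 + C * p2 \<le> K * Suc n + C * p" using a(1) b(2) by simp
  then show ?case using red_add[OF a(2) b(3)] b(4) by blast
qed

lemma main:
  assumes "f < h" "length ts = fa f" "\<forall>t\<in>set ts. is_cterm g ca t"
  shows "let u = Fun f ts; M = apps (FC f) (map (scott g) ts) in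
       (\<forall>v n. (cbv_step g ca R ^^ n) u v \<and> is_cterm g ca v \<longrightarrow>
          (\<exists>j \<le> K * n. (beta_v ^^ j) M (scott g v))) \<and>
       (\<forall>v. (cbv_step g ca R)\<^sup>*\<^sup>* u v \<and> rnormal g ca R v \<and> \<not> is_cterm g ca v \<longrightarrow>
          beta_v\<^sup>*\<^sup>* M (bot_term g)) \<and>
       ((\<exists>s. s 0 = u \<and> (\<forall>i. cbv_step g ca R (s i) (s (Suc i)))) \<longrightarrow>
          (\<exists>s. s 0 = M \<and> (\<forall>i. beta_v (s i) (s (Suc i)))))"
proof -
  let ?u = "Fun f ts" and ?M = "apps (FC f) (map (scott g) ts)"
  have r0: "rep ?M ?u 0"
  proof -
    have "rep (apps (FC f) (map (scott g) ts)) (Fun f ts) (sum_list (replicate (length ts) (0::nat)))"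
      by (rule rep.rfun) (use assms in \<open>auto intro: rep.rsc\<close>)
    then show ?thesis by (simp add: sum_list_replicate)
  qed
  have A: "\<forall>v n. (cbv_step g ca R ^^ n) ?u v \<and> is_cterm g ca v \<longrightarrow> (\<exists>j \<le> K * n. (beta_v ^^ j) ?M (scott g v))"
  proof (intro allI impI)
    fix v n assume a: "(cbv_step g ca R ^^ n) ?u v \<and> is_cterm g ca v"
    obtain j M' p' where i: "j + C * p' \<le> K * n + C * 0" "red j ?M M'" "rep M' v p'"
      using iter[OF conjunct1[OF a] r0] by blast
    obtain j' where j': "j' \<le> C * p'" "red j' M' (scott g v)"
      using lemN[OF i(3) conjunct2[OF a]] unfolding redle_def by blast
    have "j + j' \<le> K * n" using i(1) j'(1) by simp
    then show "\<exists>j \<le> K * n. (beta_v ^^ j) ?M (scott g v)" using red_add[OF i(2) j'(2)] by blast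
  qed
  have B: "\<forall>v. (cbv_step g ca R)\<^sup>*\<^sup>* ?u v \<and> rnormal g ca R v \<and> \<not> is_cterm g ca v \<longrightarrow> beta_v\<^sup>*\<^sup>* ?M (bot_term g)"
  proof (intro allI impI)
    fix v assume a: "(cbv_step g ca R)\<^sup>*\<^sup>* ?u v \<and> rnormal g ca R v \<and> \<not> is_cterm g ca v"
    obtain n where n: "(cbv_step g ca R ^^ n) ?u v" using a rtranclp_power by metis
    obtain j M' p' where i: "red j ?M M'" "rep M' v p'"
      using iter[OF n r0] by blast
    obtain b where "redle b M' (bot_term g)" using lemB[OF i(2)] a by auto
    then obtain j' where "red j' M' (bot_term g)" unfolding redle_def by blast
    from red_add[OF i(1) this] show "beta_v\<^sup>*\<^sup>* ?M (bot_term g)" using rtranclp_power by metis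
  qed
  have Cc: "(\<exists>s. s 0 = ?u \<and> (\<forall>i. cbv_step g ca R (s i) (s (Suc i)))) \<longrightarrow> (\<exists>s. s 0 = ?M \<and> (\<forall>i. beta_v (s i) (s (Suc i))))"
  proof
    assume "\<exists>s. s 0 = ?u \<and> (\<forall>i. cbv_step g ca R (s i) (s (Suc i)))"
    then obtain s where s: "s 0 = ?u" "\<forall>i. cbv_step g ca R (s i) (s (Suc i))" by blast
    let ?P = "\<lambda>x. \<exists>t p s. rep x t p \<and> s 0 = t \<and> (\<forall>i. cbv_step g ca R (s i) (s (Suc i)))"
    show "\<exists>s. s 0 = ?M \<and> (\<forall>i. beta_v (s i) (s (Suc i)))"
    proof (rule inf_chain[of ?P])
      show "?P ?M" using r0 s by blast
    next
      fix x assume "?P x"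
      then obtain t p s' where a: "rep x t p" "s' 0 = t" "\<forall>i. cbv_step g ca R (s' i) (s' (Suc i))" by blast
      obtain j M' p' where b: "1 \<le> j" "red j x M'" "rep M' (s' 1) p'"
        using lemS[of "s' 0" "s' (Suc 0)" x p] a by auto
      have "?P M'" using b(3) a(3) by (intro exI[of _ "s' 1"] exI[of _ p'] exI[of _ "\<lambda>i. s' (Suc i)"]) auto
      then show "\<exists>y j. 0 < j \<and> red j x y \<and> ?P y" using b(1,2) by (intro exI[of _ M'] exI[of _ j]) auto
    qed
  qed
  show ?thesis using A B Cc by (simp add: Let_def)
qed

end

theorem theorem2:
  fixes g h :: nat and ca fa :: "nat \<Rightarrow> nat" and R :: "'v rule list"
  assumes "constructor_trs g h ca fa R"
    and "orthogonal R"
  shows "\<exists>(F :: nat \<Rightarrow> lterm) (k :: nat). \<forall>f < h. \<forall>ts :: 'v rterm list.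
     length ts = fa f \<and> (\<forall>t\<in>set ts. is_cterm g ca t) \<longrightarrow>
     (let u = Fun f ts; M = apps (F f) (map (scott g) ts) in
       (\<forall>v n. (cbv_step g ca R ^^ n) u v \<and> is_cterm g ca v \<longrightarrow>
          (\<exists>j \<le> k * n. (beta_v ^^ j) M (scott g v))) \<and>
       (\<forall>v. (cbv_step g ca R)\<^sup>*\<^sup>* u v \<and> rnormal g ca R v \<and> \<not> is_cterm g ca v \<longrightarrow>
          beta_v\<^sup>*\<^sup>* M (bot_term g)) \<and>
       ((\<exists>s. s 0 = u \<and> (\<forall>i. cbv_step g ca R (s i) (s (Suc i)))) \<longrightarrow>
          (\<exists>s. s 0 = M \<and> (\<forall>i. beta_v (s i) (s (Suc i))))))"
proof (cases "\<exists>w::'v rterm. is_cterm g ca w")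
  case True
  interpret S: sys g h ca fa R using assms True by unfold_locales
  show ?thesis
    by (rule exI[of _ S.FC], rule exI[of _ S.K]) (use S.main in blast)
next
  case False
  have ns: "\<not> cbv_step g ca R (Fun f ([] :: 'v rterm list)) t'" for f t'
  proof
    assume "cbv_step g ca R (Fun f ([] :: 'v rterm list)) t'"
    then show False
    proof (cases rule: cbv_step.cases)
      case (root ps r \<sigma>)
      then show False using False by blast
    next
      case (ctxt_fun i t'')
      then show False by simp
    qed
  qed
  show ?thesis
  proof (rule exI[of _ "\<lambda>_. bot_term g"], rule exI[of _ 0], intro allI impI)
    fix f and ts :: "'v rterm list"
    assume "f < h" and a: "length ts = fa f \<and> (\<forall>t\<in>set ts. is_cterm g ca t)"
    then have ts: "ts = []" using False by (cases ts) auto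
    show "let u = Fun f ts; M = apps (bot_term g) (map (scott g) ts) in
       (\<forall>v n. (cbv_step g ca R ^^ n) u v \<and> is_cterm g ca v \<longrightarrow>
          (\<exists>j \<le> 0 * n. (beta_v ^^ j) M (scott g v))) \<and>
       (\<forall>v. (cbv_step g ca R)\<^sup>*\<^sup>* u v \<and> rnormal g ca R v \<and> \<not> is_cterm g ca v \<longrightarrow>
          beta_v\<^sup>*\<^sup>* M (bot_term g)) \<and>
       ((\<exists>s. s 0 = u \<and> (\<forall>i. cbv_step g ca R (s i) (s (Suc i)))) \<longrightarrow>
          (\<exists>s. s 0 = M \<and> (\<forall>i. beta_v (s i) (s (Suc i)))))"
    proof -
      have nc: "\<not> (\<exists>s. s 0 = Fun f ([] :: 'v rterm list) \<and> (\<forall>i. cbv_step g ca R (s i) (s (Suc i))))"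
        using ns by metis
      show ?thesis unfolding Let_def ts using False nc by auto
    qed
  qed
qed


end
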